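(* Suppose $\vdash t:A\vee B$ in the system $\mathsf{HA}+\mathsf{EM}_1^-$, where $t$ and $A\vee B$ are closed. Then there exists a term $u$ such that $\vdash u:A$ or a term $v$ such that $\vdash v:B$.
   Context: $\mathsf{HA}+\mathsf{EM}_1^-$ is the Curry–Howard proof-term system for intuitionistic (Heyting) arithmetic over the language $\mathcal{L}$ ($0,\mathsf{S},+,\cdot,=$; atomic formulas are decidable and $\mathsf{P}^\bot$ denotes the complementary atomic predicate of $\mathsf{P}$): natural deduction rules for $\wedge,\to,\vee,\forall,\exists$ with the usual proof terms, an induction rule, Post rules for atomic formulas (equality, Peano axioms, propositional tautologies between atomic formulas), hypothesis terms $\mathsf{H}_a^{\forall\alpha\mathsf{P}}:\forall\alpha\mathsf{P}$ (for $a:\forall\alpha\mathsf{P}$ in the context) and $\mathsf{W}_a^{\exists\alpha\mathsf{P}^\bot}:\exists\alpha\mathsf{P}^\bot$ (for $a:\exists\alpha\mathsf{P}^\bot$ in the context), and the rule $\mathsf{EM}_1^-$: from $\Gamma,a:\forall\alpha\mathsf{P}\vdash u:\exists\beta C$ and $\Gamma,a:\exists\alpha\mathsf{P}^\bot\vdash v:\exists\beta C$, with $\mathsf{P}$ and $C$ atomic, infer $\Gamma\vdash\mathsf{E}_a(u,v):\exists\beta C$. $\vdash t:A$ means $t$ is a proof term of $A$ in the empty context. *)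

theory Defs
  imports Main
begin

section \<open>Language of arithmetic (de Bruijn indices for individual variables)\<close>

datatype trm = TVar nat | TZero | TSuc trm | TPlus trm trm | TTimes trm trm

datatype atom = Eq trm trm | Neq trm trm

fun compl :: "atom \<Rightarrow> atom" where
  "compl (Eq t u) = Neq t u"
| "compl (Neq t u) = Eq t u"

datatype fm = FAtom atom | FConj fm fm | FDisj fm fm | FImp fm fm | FAll fm | FEx fm

primrec tsubst :: "(nat \<Rightarrow> trm) \<Rightarrow> trm \<Rightarrow> trm" where
  "tsubst \<sigma> (TVar n) = \<sigma> n"
| "tsubst \<sigma> TZero = TZero"
| "tsubst \<sigma> (TSuc t) = TSuc (tsubst \<sigma> t)"
| "tsubst \<sigma> (TPlus t u) = TPlus (tsubst \<sigma> t) (tsubst \<sigma> u)"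
| "tsubst \<sigma> (TTimes t u) = TTimes (tsubst \<sigma> t) (tsubst \<sigma> u)"

fun asubst :: "(nat \<Rightarrow> trm) \<Rightarrow> atom \<Rightarrow> atom" where
  "asubst \<sigma> (Eq t u) = Eq (tsubst \<sigma> t) (tsubst \<sigma> u)"
| "asubst \<sigma> (Neq t u) = Neq (tsubst \<sigma> t) (tsubst \<sigma> u)"

definition tlift :: "trm \<Rightarrow> trm" where
  "tlift = tsubst (\<lambda>n. TVar (Suc n))"

definition up :: "(nat \<Rightarrow> trm) \<Rightarrow> nat \<Rightarrow> trm" where
  "up \<sigma> n = (case n of 0 \<Rightarrow> TVar 0 | Suc m \<Rightarrow> tlift (\<sigma> m))"

primrec fsubst :: "(nat \<Rightarrow> trm) \<Rightarrow> fm \<Rightarrow> fm" where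
  "fsubst \<sigma> (FAtom a) = FAtom (asubst \<sigma> a)"
| "fsubst \<sigma> (FConj A B) = FConj (fsubst \<sigma> A) (fsubst \<sigma> B)"
| "fsubst \<sigma> (FDisj A B) = FDisj (fsubst \<sigma> A) (fsubst \<sigma> B)"
| "fsubst \<sigma> (FImp A B) = FImp (fsubst \<sigma> A) (fsubst \<sigma> B)"
| "fsubst \<sigma> (FAll A) = FAll (fsubst (up \<sigma>) A)"
| "fsubst \<sigma> (FEx A) = FEx (fsubst (up \<sigma>) A)"

text \<open>Instantiation of the outermost bound variable (index 0) by a term: A[t/\<alpha>].\<close>
definition inst :: "trm \<Rightarrow> nat \<Rightarrow> trm" where
  "inst t n = (case n of 0 \<Rightarrow> t | Suc m \<Rightarrow> TVar m)"

definition flift :: "fm \<Rightarrow> fm" where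
  "flift = fsubst (\<lambda>n. TVar (Suc n))"

text \<open>A(S \<alpha>) for \<alpha> the variable of index 0 (no change of binding level).\<close>
definition succ0 :: "nat \<Rightarrow> trm" where
  "succ0 n = (if n = 0 then TSuc (TVar 0) else TVar n)"

primrec tfv :: "trm \<Rightarrow> nat set" where
  "tfv (TVar n) = {n}"
| "tfv TZero = {}"
| "tfv (TSuc t) = tfv t"
| "tfv (TPlus t u) = tfv t \<union> tfv u"
| "tfv (TTimes t u) = tfv t \<union> tfv u"

fun afv :: "atom \<Rightarrow> nat set" where
  "afv (Eq t u) = tfv t \<union> tfv u"
| "afv (Neq t u) = tfv t \<union> tfv u"

definition unbind :: "nat set \<Rightarrow> nat set" where
  "unbind S = {n. Suc n \<in> S}"

primrec ffv :: "fm \<Rightarrow> nat set" where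
  "ffv (FAtom a) = afv a"
| "ffv (FConj A B) = ffv A \<union> ffv B"
| "ffv (FDisj A B) = ffv A \<union> ffv B"
| "ffv (FImp A B) = ffv A \<union> ffv B"
| "ffv (FAll A) = unbind (ffv A)"
| "ffv (FEx A) = unbind (ffv A)"

definition fm_closed :: "fm \<Rightarrow> bool" where
  "fm_closed A \<longleftrightarrow> ffv A = {}"

datatype pt =
    PVar nat
  | PHyp nat
  | PWit nat
  | PPair pt pt | PFst pt | PSnd pt
  | PLam nat pt | PApp pt pt
  | PInl pt | PInr pt | PCase pt nat pt nat pt
  | PLamI pt                    \<comment> \<open>\<lambda>\<alpha> u (binds individual variable 0)\<close>
  | PAppI pt trm
  | PPairI trm pt
  | PExE pt nat pt              \<comment> \<open>u[(\<alpha>,x).v] (binds individual variable 0 in v)\<close>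
  | PRec pt pt trm
  | PPost "pt list"
  | PEM nat pt pt

fun ptfv :: "pt \<Rightarrow> nat set" where
  "ptfv (PVar x) = {}"
| "ptfv (PHyp a) = {}"
| "ptfv (PWit a) = {}"
| "ptfv (PPair u v) = ptfv u \<union> ptfv v"
| "ptfv (PFst u) = ptfv u"
| "ptfv (PSnd u) = ptfv u"
| "ptfv (PLam x u) = ptfv u"
| "ptfv (PApp u v) = ptfv u \<union> ptfv v"
| "ptfv (PInl u) = ptfv u"
| "ptfv (PInr u) = ptfv u"
| "ptfv (PCase u x v y w) = ptfv u \<union> ptfv v \<union> ptfv w"
| "ptfv (PLamI u) = unbind (ptfv u)"
| "ptfv (PAppI u t) = ptfv u \<union> tfv t"
| "ptfv (PPairI t u) = tfv t \<union> ptfv u"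
| "ptfv (PExE u x v) = ptfv u \<union> unbind (ptfv v)"
| "ptfv (PRec u v t) = ptfv u \<union> ptfv v \<union> tfv t"
| "ptfv (PPost us) = (\<Union>u\<in>set us. ptfv u)"
| "ptfv (PEM a u v) = ptfv u \<union> ptfv v"

definition pt_closed :: "pt \<Rightarrow> bool" where
  "pt_closed u \<longleftrightarrow> ptfv u = {}"

text \<open>Post rules P1,...,Pn / P: equality axioms (reflexivity, Leibniz substitution for
  atomic formulas), Peano axioms, and propositional tautologies between atomic formulas
  (atoms as propositional variables, with P^\<bottom> read as the negation of P).\<close>
inductive post_rule :: "atom list \<Rightarrow> atom \<Rightarrow> bool" where
  refl: "post_rule [] (Eq t t)"
| leibniz: "post_rule [Eq t u, asubst (inst t) Q] (asubst (inst u) Q)"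
| suc_ne_zero: "post_rule [] (Neq (TSuc t) TZero)"
| suc_inj: "post_rule [Eq (TSuc t) (TSuc u)] (Eq t u)"
| plus_zero: "post_rule [] (Eq (TPlus t TZero) t)"
| plus_suc: "post_rule [] (Eq (TPlus t (TSuc u)) (TSuc (TPlus t u)))"
| times_zero: "post_rule [] (Eq (TTimes t TZero) TZero)"
| times_suc: "post_rule [] (Eq (TTimes t (TSuc u)) (TPlus (TTimes t u) t))"
| taut: "(\<And>v. (\<forall>a. v (compl a) = (\<not> v a)) \<Longrightarrow> (\<forall>Q\<in>set Qs. v Q) \<Longrightarrow> v P)
         \<Longrightarrow> post_rule Qs P"

definition ctx_lift :: "(nat \<times> fm) list \<Rightarrow> (nat \<times> fm) list" where
  "ctx_lift \<Gamma> = map (\<lambda>(x, B). (x, flift B)) \<Gamma>"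

inductive der :: "(nat \<times> fm) list \<Rightarrow> pt \<Rightarrow> fm \<Rightarrow> bool" where
  var: "map_of \<Gamma> x = Some A \<Longrightarrow> der \<Gamma> (PVar x) A"
| hyp: "map_of \<Gamma> a = Some (FAll (FAtom P)) \<Longrightarrow> der \<Gamma> (PHyp a) (FAll (FAtom P))"
| wit: "map_of \<Gamma> a = Some (FEx (FAtom (compl P))) \<Longrightarrow> der \<Gamma> (PWit a) (FEx (FAtom (compl P)))"
| conjI: "der \<Gamma> u A \<Longrightarrow> der \<Gamma> v B \<Longrightarrow> der \<Gamma> (PPair u v) (FConj A B)"
| conjE1: "der \<Gamma> u (FConj A B) \<Longrightarrow> der \<Gamma> (PFst u) A"
| conjE2: "der \<Gamma> u (FConj A B) \<Longrightarrow> der \<Gamma> (PSnd u) B"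
| impI: "der ((x, A) # \<Gamma>) u B \<Longrightarrow> der \<Gamma> (PLam x u) (FImp A B)"
| impE: "der \<Gamma> u (FImp A B) \<Longrightarrow> der \<Gamma> v A \<Longrightarrow> der \<Gamma> (PApp u v) B"
| disjI1: "der \<Gamma> u A \<Longrightarrow> der \<Gamma> (PInl u) (FDisj A B)"
| disjI2: "der \<Gamma> u B \<Longrightarrow> der \<Gamma> (PInr u) (FDisj A B)"
| disjE: "der \<Gamma> u (FDisj A B) \<Longrightarrow> der ((x, A) # \<Gamma>) v C \<Longrightarrow> der ((y, B) # \<Gamma>) w C
           \<Longrightarrow> der \<Gamma> (PCase u x v y w) C"
| allI: "der (ctx_lift \<Gamma>) u A \<Longrightarrow> der \<Gamma> (PLamI u) (FAll A)"
| allE: "der \<Gamma> u (FAll A) \<Longrightarrow> der \<Gamma> (PAppI u t) (fsubst (inst t) A)"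
| exI: "der \<Gamma> u (fsubst (inst t) A) \<Longrightarrow> der \<Gamma> (PPairI t u) (FEx A)"
| exE: "der \<Gamma> u (FEx A) \<Longrightarrow> der ((x, A) # ctx_lift \<Gamma>) v (flift C)
          \<Longrightarrow> der \<Gamma> (PExE u x v) C"
| ind: "der \<Gamma> u (fsubst (inst TZero) A) \<Longrightarrow> der \<Gamma> v (FAll (FImp A (fsubst succ0 A)))
          \<Longrightarrow> der \<Gamma> (PRec u v t) (fsubst (inst t) A)"
| post: "length us = length Ps \<Longrightarrow> (\<forall>i<length us. der \<Gamma> (us ! i) (FAtom (Ps ! i)))
          \<Longrightarrow> post_rule Ps P \<Longrightarrow> der \<Gamma> (PPost us) (FAtom P)"
| em1: "der ((a, FAll (FAtom P)) # \<Gamma>) u (FEx (FAtom C))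
          \<Longrightarrow> der ((a, FEx (FAtom (compl P))) # \<Gamma>) v (FEx (FAtom C))
          \<Longrightarrow> der \<Gamma> (PEM a u v) (FEx (FAtom C))"

end

theory Submission
  imports Defs
begin


lemma tsubst_tsubst: "tsubst \<sigma> (tsubst \<tau> t) = tsubst (\<lambda>i. tsubst \<sigma> (\<tau> i)) t"
  by (induction t) auto

lemma tsubst_cong: "(\<And>i. i \<in> tfv t \<Longrightarrow> \<sigma> i = \<tau> i) \<Longrightarrow> tsubst \<sigma> t = tsubst \<tau> t"
  by (induction t) auto

lemma tsubst_id: "tsubst TVar t = t"
  by (induction t) auto

lemma tsubst_closed: "tfv t = {} \<Longrightarrow> tsubst \<sigma> t = t"
  using tsubst_cong[of t \<sigma> TVar] tsubst_id by auto

lemma tfv_tsubst: "tfv (tsubst \<sigma> t) = (\<Union>i\<in>tfv t. tfv (\<sigma> i))"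
  by (induction t) auto

lemma up_eq: "up \<sigma> = case_nat (TVar 0) (\<lambda>m. tlift (\<sigma> m))"
  by (rule ext) (simp add: up_def split: nat.split)

lemma up_0[simp]: "up \<sigma> 0 = TVar 0" and up_Suc[simp]: "up \<sigma> (Suc m) = tlift (\<sigma> m)"
  by (auto simp: up_def)

lemma inst_0[simp]: "inst t 0 = t" and inst_Suc[simp]: "inst t (Suc m) = TVar m"
  by (auto simp: inst_def)

lemma succ0_0[simp]: "succ0 0 = TSuc (TVar 0)" and succ0_Suc[simp]: "succ0 (Suc m) = TVar (Suc m)"
  by (auto simp: succ0_def)

lemma up_comp: "(\<lambda>i. tsubst (up \<sigma>) (up \<tau> i)) = up (\<lambda>i. tsubst \<sigma> (\<tau> i))"
proof
  fix i show "tsubst (up \<sigma>) (up \<tau> i) = up (\<lambda>i. tsubst \<sigma> (\<tau> i)) i"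
    by (cases i) (auto simp: tlift_def tsubst_tsubst)
qed

lemma asubst_asubst: "asubst \<sigma> (asubst \<tau> a) = asubst (\<lambda>i. tsubst \<sigma> (\<tau> i)) a"
  by (cases a) (auto simp: tsubst_tsubst)

lemma fsubst_fsubst: "fsubst \<sigma> (fsubst \<tau> A) = fsubst (\<lambda>i. tsubst \<sigma> (\<tau> i)) A"
  by (induction A arbitrary: \<sigma> \<tau>) (auto simp: asubst_asubst up_comp)

lemma asubst_cong: "(\<And>i. i \<in> afv a \<Longrightarrow> \<sigma> i = \<tau> i) \<Longrightarrow> asubst \<sigma> a = asubst \<tau> a"
  by (cases a) (auto intro!: tsubst_cong)

lemma fsubst_cong: "(\<And>i. i \<in> ffv A \<Longrightarrow> \<sigma> i = \<tau> i) \<Longrightarrow> fsubst \<sigma> A = fsubst \<tau> A"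
proof (induction A arbitrary: \<sigma> \<tau>)
  case (FAtom a) thus ?case by (auto intro: asubst_cong)
next
  case (FAll A)
  have "fsubst (up \<sigma>) A = fsubst (up \<tau>) A"
    by (rule FAll.IH) (use FAll.prems in \<open>auto simp: unbind_def up_def split: nat.split\<close>)
  thus ?case by simp
next
  case (FEx A)
  have "fsubst (up \<sigma>) A = fsubst (up \<tau>) A"
    by (rule FEx.IH) (use FEx.prems in \<open>auto simp: unbind_def up_def split: nat.split\<close>)
  thus ?case by simp
next
  case (FConj A B) thus ?case by (metis Un_iff ffv.simps(2) fsubst.simps(2))
next
  case (FDisj A B) thus ?case by (metis Un_iff ffv.simps(3) fsubst.simps(3))
next
  case (FImp A B) thus ?case by (metis Un_iff ffv.simps(4) fsubst.simps(4))
qed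

lemma up_TVar: "up TVar = TVar"
  by (rule ext) (auto simp: up_def tlift_def split: nat.split)

lemma fsubst_id: "fsubst TVar A = A"
proof (induction A)
  case (FAtom a) thus ?case by (cases a) (auto simp: tsubst_id)
qed (auto simp: up_TVar)

lemma fsubst_closed: "ffv A = {} \<Longrightarrow> fsubst \<sigma> A = A"
  using fsubst_cong[of A \<sigma> TVar] fsubst_id by auto

lemma asubst_compl: "asubst \<sigma> (compl a) = compl (asubst \<sigma> a)"
  by (cases a) auto

section \<open>Semantics\<close>

primrec teval :: "(nat \<Rightarrow> nat) \<Rightarrow> trm \<Rightarrow> nat" where
  "teval e (TVar n) = e n"
| "teval e TZero = 0"
| "teval e (TSuc t) = Suc (teval e t)"
| "teval e (TPlus t u) = teval e t + teval e u"
| "teval e (TTimes t u) = teval e t * teval e u"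

fun aeval :: "(nat \<Rightarrow> nat) \<Rightarrow> atom \<Rightarrow> bool" where
  "aeval e (Eq t u) = (teval e t = teval e u)"
| "aeval e (Neq t u) = (teval e t \<noteq> teval e u)"

primrec holds :: "(nat \<Rightarrow> nat) \<Rightarrow> fm \<Rightarrow> bool" where
  "holds e (FAtom a) = aeval e a"
| "holds e (FConj A B) = (holds e A \<and> holds e B)"
| "holds e (FDisj A B) = (holds e A \<or> holds e B)"
| "holds e (FImp A B) = (holds e A \<longrightarrow> holds e B)"
| "holds e (FAll A) = (\<forall>n. holds (case_nat n e) A)"
| "holds e (FEx A) = (\<exists>n. holds (case_nat n e) A)"

lemma teval_tsubst: "teval e (tsubst \<sigma> t) = teval (\<lambda>i. teval e (\<sigma> i)) t"
  by (induction t) auto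

lemma aeval_asubst: "aeval e (asubst \<sigma> a) = aeval (\<lambda>i. teval e (\<sigma> i)) a"
  by (cases a) (auto simp: teval_tsubst)

lemma aeval_compl: "aeval e (compl a) = (\<not> aeval e a)"
  by (cases a) auto

lemma teval_up: "(\<lambda>i. teval (case_nat n e) (up \<sigma> i)) = case_nat n (\<lambda>i. teval e (\<sigma> i))"
  by (rule ext) (auto simp: up_def tlift_def teval_tsubst split: nat.split)

lemma holds_fsubst: "holds e (fsubst \<sigma> A) = holds (\<lambda>i. teval e (\<sigma> i)) A"
  by (induction A arbitrary: e \<sigma>) (auto simp: aeval_asubst teval_up)

lemma holds_flift: "holds (case_nat n e) (flift A) = holds e A"
  by (simp add: flift_def holds_fsubst)

lemma holds_inst: "holds e (fsubst (inst t) A) = holds (case_nat (teval e t) e) A"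
proof -
  have "(\<lambda>i. teval e (inst t i)) = case_nat (teval e t) e"
    by (rule ext) (auto simp: inst_def split: nat.split)
  thus ?thesis by (simp add: holds_fsubst)
qed

lemma holds_succ0: "holds (case_nat n e) (fsubst succ0 A) = holds (case_nat (Suc n) e) A"
proof -
  have "(\<lambda>i. teval (case_nat n e) (succ0 i)) = case_nat (Suc n) e"
    by (rule ext) (auto simp: succ0_def split: nat.split)
  thus ?thesis by (simp add: holds_fsubst)
qed

lemma teval_inst: "(\<lambda>i. teval e (inst t i)) = case_nat (teval e t) e"
  by (rule ext) (auto simp: inst_def split: nat.split)

lemma aeval_inst: "aeval e (asubst (inst t) Q) = aeval (case_nat (teval e t) e) Q"
  by (simp add: aeval_asubst teval_inst)

lemma post_sound: "post_rule Ps P \<Longrightarrow> (\<forall>Q\<in>set Ps. aeval e Q) \<Longrightarrow> aeval e P"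
proof (induction rule: post_rule.induct)
  case (leibniz t u Q)
  thus ?case by (simp add: aeval_inst) metis
next
  case (taut Qs P)
  show ?case by (rule taut(1)[of "aeval e"]) (use taut(2) aeval_compl in auto)
qed auto

lemma map_of_ctx_lift: "map_of (ctx_lift \<Gamma>) x = map_option flift (map_of \<Gamma> x)"
  by (simp add: ctx_lift_def map_of_map)

lemma hyps_cons:
  "(\<forall>x B. map_of ((y,A)#\<Gamma>) x = Some B \<longrightarrow> P B) \<longleftrightarrow> P A \<and> (\<forall>x B. x \<noteq> y \<longrightarrow> map_of \<Gamma> x = Some B \<longrightarrow> P B)"
  by auto

lemma hyps_consI:
  "P A \<Longrightarrow> \<forall>x B. map_of \<Gamma> x = Some B \<longrightarrow> P B \<Longrightarrow> \<forall>x B. map_of ((y,A)#\<Gamma>) x = Some B \<longrightarrow> P B"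
  by auto

lemma hyps_lift:
  "(\<forall>x B. map_of (ctx_lift \<Gamma>) x = Some B \<longrightarrow> P B) \<longleftrightarrow> (\<forall>x B. map_of \<Gamma> x = Some B \<longrightarrow> P (flift B))"
  by (auto simp: map_of_ctx_lift)

lemma classical_sound:
  "der \<Gamma> u A \<Longrightarrow> \<forall>x B. map_of \<Gamma> x = Some B \<longrightarrow> holds e B \<Longrightarrow> holds e A"
proof (induction arbitrary: e rule: der.induct)
  case (var \<Gamma> x A) thus ?case by blast
next
  case (hyp \<Gamma> a P) thus ?case by blast
next
  case (wit \<Gamma> a P) thus ?case by blast
next
  case (conjI \<Gamma> u A v B) thus ?case by simp
next
  case (conjE1 \<Gamma> u A B)
  have "holds e (FConj A B)" by (rule conjE1.IH) (rule conjE1.prems)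
  thus ?case by simp
next
  case (conjE2 \<Gamma> u A B)
  have "holds e (FConj A B)" by (rule conjE2.IH) (rule conjE2.prems)
  thus ?case by simp
next
  case (impI x A \<Gamma> u B)
  show ?case
  proof (simp, rule HOL.impI)
    assume a: "holds e A"
    show "holds e B" by (rule impI.IH) (rule hyps_consI[OF a impI.prems])
  qed
next
  case (impE \<Gamma> u A B v)
  have "holds e (FImp A B)" by (rule impE.IH) (rule impE.prems)
  moreover have "holds e A" by (rule impE.IH) (rule impE.prems)
  ultimately show ?case by simp
next
  case (disjI1 \<Gamma> u A B)
  have "holds e A" by (rule disjI1.IH) (rule disjI1.prems)
  thus ?case by simp
next
  case (disjI2 \<Gamma> u B A)
  have "holds e B" by (rule disjI2.IH) (rule disjI2.prems)
  thus ?case by simp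
next
  case (disjE \<Gamma> u A B x v C y w)
  have "holds e (FDisj A B)" by (rule disjE.IH) (rule disjE.prems)
  hence "holds e A \<or> holds e B" by simp
  thus ?case
  proof
    assume a: "holds e A"
    show ?case by (rule disjE.IH(2)) (rule hyps_consI[OF a disjE.prems])
  next
    assume a: "holds e B"
    show ?case by (rule disjE.IH(3)) (rule hyps_consI[OF a disjE.prems])
  qed
next
  case (allI \<Gamma> u A)
  show ?case
  proof (simp, intro HOL.allI)
    fix n show "holds (case_nat n e) A"
      by (rule allI.IH) (use allI.prems in \<open>simp only: hyps_lift holds_flift\<close>)
  qed
next
  case (allE \<Gamma> u A t)
  have "holds e (FAll A)" by (rule allE.IH) (rule allE.prems)
  thus ?case by (simp add: holds_inst)
next
  case (exI \<Gamma> u t A)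
  have "holds e (fsubst (inst t) A)" by (rule exI.IH) (rule exI.prems)
  thus ?case by (auto simp: holds_inst)
next
  case (exE \<Gamma> u A x v C)
  have "holds e (FEx A)" by (rule exE.IH(1)) (rule exE.prems)
  then obtain n where n: "holds (case_nat n e) A" by auto
  have h: "\<forall>y B. map_of ((x, A) # ctx_lift \<Gamma>) y = Some B \<longrightarrow> holds (case_nat n e) B"
  proof (intro HOL.allI HOL.impI)
    fix y B assume m: "map_of ((x, A) # ctx_lift \<Gamma>) y = Some B"
    show "holds (case_nat n e) B"
    proof (cases "y = x")
      case True thus ?thesis using m n by simp
    next
      case False
      then obtain B' where "map_of \<Gamma> y = Some B'" "B = flift B'" using m by (auto simp: map_of_ctx_lift)
      thus ?thesis using exE.prems by (simp add: holds_flift)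
    qed
  qed
  have "holds (case_nat n e) (flift C)" by (rule exE.IH(2)) (rule h)
  thus ?case by (simp add: holds_flift)
next
  case (ind \<Gamma> u A v t)
  have b: "holds (case_nat 0 e) A"
    using ind.IH(1)[OF ind.prems] by (simp add: holds_inst)
  have s: "\<And>n. holds (case_nat n e) A \<Longrightarrow> holds (case_nat (Suc n) e) A"
    using ind.IH(2)[OF ind.prems] by (simp add: holds_succ0)
  have "\<And>n. holds (case_nat n e) A"
  proof -
    fix n show "holds (case_nat n e) A" by (induction n) (use b s in auto)
  qed
  thus ?case by (simp add: holds_inst)
next
  case (post us Ps \<Gamma> P)
  have "\<forall>Q\<in>set Ps. aeval e Q"
  proof
    fix Q assume "Q \<in> set Ps"
    then obtain i where i: "i < length Ps" "Q = Ps ! i" by (auto simp: in_set_conv_nth)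
    have "holds e (FAtom (Ps ! i))"
    proof -
      have "\<forall>e'. (\<forall>x B. map_of \<Gamma> x = Some B \<longrightarrow> holds e' B) \<longrightarrow> holds e' (FAtom (Ps ! i))"
        using post.IH post.hyps(1) i(1) by simp
      thus ?thesis using post.prems by blast
    qed
    thus "aeval e Q" using i by simp
  qed
  thus ?case using post_sound[OF post.hyps(2)] by simp
next
  case (em1 a P \<Gamma> u C v)
  show ?case
  proof (cases "\<forall>n. aeval (case_nat n e) P")
    case True
    hence "holds e (FAll (FAtom P))" by simp
    show ?thesis by (rule em1.IH(1)) (rule hyps_consI[OF \<open>holds e (FAll (FAtom P))\<close> em1.prems])
  next
    case False
    hence "holds e (FEx (FAtom (compl P)))" by (simp add: aeval_compl)
    show ?thesis by (rule em1.IH(2)) (rule hyps_consI[OF \<open>holds e (FEx (FAtom (compl P)))\<close> em1.prems])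
  qed
qed



definition sub :: "(nat \<times> fm) list \<Rightarrow> (nat \<times> fm) list \<Rightarrow> bool" where
  "sub \<Gamma> \<Gamma>' \<longleftrightarrow> (\<forall>z C. map_of \<Gamma> z = Some C \<longrightarrow> map_of \<Gamma>' z = Some C)"

lemma sub_cons: "sub \<Gamma> \<Gamma>' \<Longrightarrow> sub ((x,A)#\<Gamma>) ((x,A)#\<Gamma>')"
  unfolding sub_def by auto

lemma sub_lift: "sub \<Gamma> \<Gamma>' \<Longrightarrow> sub (ctx_lift \<Gamma>) (ctx_lift \<Gamma>')"
  unfolding sub_def by (auto simp: map_of_ctx_lift)

lemma sub_D: "sub \<Gamma> \<Gamma>' \<Longrightarrow> map_of \<Gamma> z = Some C \<Longrightarrow> map_of \<Gamma>' z = Some C"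
  unfolding sub_def by auto

lemma weaken: "der \<Gamma> w A \<Longrightarrow> sub \<Gamma> \<Gamma>' \<Longrightarrow> der \<Gamma>' w A"
proof (induction arbitrary: \<Gamma>' rule: der.induct)
  case (var \<Gamma> x A) thus ?case by (metis der.var sub_D)
next
  case (hyp \<Gamma> a P) thus ?case by (metis der.hyp sub_D)
next
  case (wit \<Gamma> a P) thus ?case by (metis der.wit sub_D)
next
  case (conjI \<Gamma> u A v B) thus ?case by (intro der.conjI) auto
next
  case (conjE1 \<Gamma> u A B) thus ?case by (meson der.conjE1)
next
  case (conjE2 \<Gamma> u A B) thus ?case by (meson der.conjE2)
next
  case (impI x A \<Gamma> u B) thus ?case by (meson der.impI sub_cons)
next
  case (impE \<Gamma> u A B v) thus ?case by (meson der.impE)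
next
  case (disjI1 \<Gamma> u A B) thus ?case by (meson der.disjI1)
next
  case (disjI2 \<Gamma> u B A) thus ?case by (meson der.disjI2)
next
  case (disjE \<Gamma> u A B x v C y w) thus ?case by (meson der.disjE sub_cons)
next
  case (allI \<Gamma> u A) thus ?case by (meson der.allI sub_lift)
next
  case (allE \<Gamma> u A t) thus ?case by (meson der.allE)
next
  case (exI \<Gamma> u t A) thus ?case by (meson der.exI)
next
  case (exE \<Gamma> u A x v C) thus ?case by (meson der.exE sub_cons sub_lift)
next
  case (ind \<Gamma> u A v t) thus ?case by (meson der.ind)
next
  case (post us Ps \<Gamma> P)
  show ?case
  proof (rule der.post[OF post.hyps(1) _ post.hyps(2)], intro HOL.allI HOL.impI)
    fix i assume "i < length us"
    hence "der \<Gamma> (us ! i) (FAtom (Ps ! i)) \<and> (\<forall>\<Gamma>'. sub \<Gamma> \<Gamma>' \<longrightarrow> der \<Gamma>' (us ! i) (FAtom (Ps ! i)))"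
      using post.IH by simp
    thus "der \<Gamma>' (us ! i) (FAtom (Ps ! i))" using post.prems by blast
  qed
next
  case (em1 a P \<Gamma> u C v) thus ?case by (meson der.em1 sub_cons)
qed

lemma weaken_nil: "der [] w A \<Longrightarrow> der \<Gamma> w A"
  by (erule weaken) (simp add: sub_def)

section \<open>Substitution\<close>

definition ok :: "(nat \<times> fm) list \<Rightarrow> (nat \<times> fm) list \<Rightarrow> (nat \<Rightarrow> nat) \<Rightarrow> (nat \<Rightarrow> trm) \<Rightarrow> bool" where
  "ok \<Gamma> \<Delta> r \<sigma> \<longleftrightarrow> (\<forall>z B. map_of \<Gamma> z = Some B \<longrightarrow> map_of \<Delta> (r z) = Some (fsubst \<sigma> B))"

lemma ex_fresh: "\<exists>x::nat. x \<notin> fst ` set \<Delta>"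
  by (meson ex_new_if_finite finite_imageI finite_set infinite_UNIV_nat)

lemma ok_cons: "ok \<Gamma> \<Delta> r \<sigma> \<Longrightarrow> x' \<notin> fst ` set \<Delta> \<Longrightarrow>
   ok ((x,A)#\<Gamma>) ((x', fsubst \<sigma> A)#\<Delta>) (r(x:=x')) \<sigma>"
  unfolding ok_def
proof (intro HOL.allI HOL.impI)
  fix z B
  assume o: "\<forall>z B. map_of \<Gamma> z = Some B \<longrightarrow> map_of \<Delta> (r z) = Some (fsubst \<sigma> B)"
    and f: "x' \<notin> fst ` set \<Delta>" and m: "map_of ((x, A) # \<Gamma>) z = Some B"
  show "map_of ((x', fsubst \<sigma> A) # \<Delta>) ((r(x := x')) z) = Some (fsubst \<sigma> B)"
  proof (cases "z = x")
    case True thus ?thesis using m by simp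
  next
    case False
    hence m': "map_of \<Gamma> z = Some B" using m by simp
    hence d: "map_of \<Delta> (r z) = Some (fsubst \<sigma> B)" using o by blast
    hence "r z \<noteq> x'" using f by (metis map_of_eq_None_iff option.distinct(1))
    thus ?thesis using False d by simp
  qed
qed

lemma fsubst_flift: "fsubst (up \<sigma>) (flift B) = flift (fsubst \<sigma> B)"
  by (simp add: flift_def fsubst_fsubst tlift_def)

lemma fst_ctx_lift: "fst ` set (ctx_lift \<Delta>) = fst ` set \<Delta>"
  by (force simp: ctx_lift_def)

lemma ok_lift: "ok \<Gamma> \<Delta> r \<sigma> \<Longrightarrow> ok (ctx_lift \<Gamma>) (ctx_lift \<Delta>) r (up \<sigma>)"
  unfolding ok_def by (auto simp: map_of_ctx_lift fsubst_flift)

lemma inst_comm_pt: "(\<lambda>i. tsubst \<sigma> (inst t i)) = (\<lambda>i. tsubst (inst (tsubst \<sigma> t)) (up \<sigma> i))"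
proof
  fix i show "tsubst \<sigma> (inst t i) = tsubst (inst (tsubst \<sigma> t)) (up \<sigma> i)"
    by (cases i) (auto simp: tlift_def tsubst_tsubst tsubst_id)
qed

lemma fsubst_inst: "fsubst \<sigma> (fsubst (inst t) A) = fsubst (inst (tsubst \<sigma> t)) (fsubst (up \<sigma>) A)"
  by (simp add: fsubst_fsubst inst_comm_pt)

lemma asubst_inst: "asubst \<sigma> (asubst (inst t) A) = asubst (inst (tsubst \<sigma> t)) (asubst (up \<sigma>) A)"
  by (simp add: asubst_asubst inst_comm_pt)

lemma fsubst_succ0: "fsubst (up \<sigma>) (fsubst succ0 A) = fsubst succ0 (fsubst (up \<sigma>) A)"
proof -
  have "(\<lambda>i. tsubst (up \<sigma>) (succ0 i)) = (\<lambda>i. tsubst succ0 (up \<sigma> i))"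
  proof
    fix i show "tsubst (up \<sigma>) (succ0 i) = tsubst succ0 (up \<sigma> i)"
      by (cases i) (auto simp: tlift_def tsubst_tsubst)
  qed
  thus ?thesis by (simp add: fsubst_fsubst)
qed

lemma post_subst: "post_rule Ps P \<Longrightarrow> post_rule (map (asubst \<sigma>) Ps) (asubst \<sigma> P)"
proof (induction rule: post_rule.induct)
  case (refl t) thus ?case by (simp add: post_rule.refl)
next
  case (leibniz t u Q) thus ?case by (simp add: asubst_inst post_rule.leibniz)
next
  case (suc_ne_zero t) thus ?case by (simp add: post_rule.suc_ne_zero)
next
  case (suc_inj t u) thus ?case by (simp add: post_rule.suc_inj)
next
  case (plus_zero t) thus ?case by (simp add: post_rule.plus_zero)
next
  case (plus_suc t u) thus ?case by (simp add: post_rule.plus_suc)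
next
  case (times_zero t) thus ?case by (simp add: post_rule.times_zero)
next
  case (times_suc t u) thus ?case by (simp add: post_rule.times_suc)
next
  case (taut Qs P)
  show ?case
  proof (rule post_rule.taut)
    fix v :: "atom \<Rightarrow> bool"
    assume c: "\<forall>a. v (compl a) = (\<not> v a)" and q: "\<forall>Q\<in>set (map (asubst \<sigma>) Qs). v Q"
    have "\<forall>a. (v \<circ> asubst \<sigma>) (compl a) = (\<not> (v \<circ> asubst \<sigma>) a)"
      using c by (simp add: asubst_compl)
    moreover have "\<forall>Q\<in>set Qs. (v \<circ> asubst \<sigma>) Q" using q by simp
    ultimately have "(v \<circ> asubst \<sigma>) P" by (rule taut.hyps)
    thus "v (asubst \<sigma> P)" by simp
  qed
qed

lemma der_subst: "der \<Gamma> u A \<Longrightarrow> ok \<Gamma> \<Delta> r \<sigma> \<Longrightarrow> \<exists>w. der \<Delta> w (fsubst \<sigma> A)"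
proof (induction arbitrary: \<Delta> r \<sigma> rule: der.induct)
  case (var \<Gamma> x A) thus ?case unfolding ok_def by (meson der.var)
next
  case (hyp \<Gamma> a P)
  hence "map_of \<Delta> (r a) = Some (FAll (FAtom (asubst (up \<sigma>) P)))" unfolding ok_def by auto
  thus ?case by (auto intro: der.hyp)
next
  case (wit \<Gamma> a P)
  hence "map_of \<Delta> (r a) = Some (FEx (FAtom (compl (asubst (up \<sigma>) P))))" unfolding ok_def by (auto simp: asubst_compl)
  thus ?case by (auto simp: asubst_compl intro: der.wit)
next
  case (conjI \<Gamma> u A v B)
  obtain w1 w2 where "der \<Delta> w1 (fsubst \<sigma> A)" "der \<Delta> w2 (fsubst \<sigma> B)"
    using conjI.IH conjI.prems by blast
  thus ?case by (auto intro: der.conjI)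
next
  case (conjE1 \<Gamma> u A B) thus ?case by (metis der.conjE1 fsubst.simps(2))
next
  case (conjE2 \<Gamma> u A B) thus ?case by (metis der.conjE2 fsubst.simps(2))
next
  case (impI x A \<Gamma> u B)
  obtain x' where f: "x' \<notin> fst ` set \<Delta>" using ex_fresh by blast
  obtain w where "der ((x', fsubst \<sigma> A)#\<Delta>) w (fsubst \<sigma> B)"
    using impI.IH ok_cons[OF impI.prems f] by blast
  thus ?case by (auto intro: der.impI)
next
  case (impE \<Gamma> u A B v) thus ?case by (metis der.impE fsubst.simps(4))
next
  case (disjI1 \<Gamma> u A B) thus ?case by (metis der.disjI1 fsubst.simps(3))
next
  case (disjI2 \<Gamma> u B A) thus ?case by (metis der.disjI2 fsubst.simps(3))
next
  case (disjE \<Gamma> u A B x v C y w)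
  obtain x' where f: "x' \<notin> fst ` set \<Delta>" using ex_fresh by blast
  obtain w0 where w0: "der \<Delta> w0 (FDisj (fsubst \<sigma> A) (fsubst \<sigma> B))"
    using disjE.IH(1)[OF disjE.prems] by auto
  obtain w1 where w1: "der ((x', fsubst \<sigma> A)#\<Delta>) w1 (fsubst \<sigma> C)"
    using disjE.IH(2) ok_cons[OF disjE.prems f] by blast
  obtain w2 where w2: "der ((x', fsubst \<sigma> B)#\<Delta>) w2 (fsubst \<sigma> C)"
    using disjE.IH(3) ok_cons[OF disjE.prems f] by blast
  show ?case using der.disjE[OF w0 w1 w2] by blast
next
  case (allI \<Gamma> u A)
  obtain w where "der (ctx_lift \<Delta>) w (fsubst (up \<sigma>) A)"
    using allI.IH ok_lift[OF allI.prems] by blast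
  thus ?case by (auto intro: der.allI)
next
  case (allE \<Gamma> u A t)
  obtain w where "der \<Delta> w (FAll (fsubst (up \<sigma>) A))" using allE.IH[OF allE.prems] by auto
  from der.allE[OF this, of "tsubst \<sigma> t"] show ?case by (auto simp: fsubst_inst)
next
  case (exI \<Gamma> u t A)
  obtain w where "der \<Delta> w (fsubst (inst (tsubst \<sigma> t)) (fsubst (up \<sigma>) A))"
    using exI.IH[OF exI.prems] by (auto simp: fsubst_inst)
  from der.exI[OF this] show ?case by auto
next
  case (exE \<Gamma> u A x v C)
  obtain x' where f: "x' \<notin> fst ` set (ctx_lift \<Delta>)" using ex_fresh by blast
  obtain w0 where w0: "der \<Delta> w0 (FEx (fsubst (up \<sigma>) A))" using exE.IH(1)[OF exE.prems] by auto
  obtain w1 where "der ((x', fsubst (up \<sigma>) A) # ctx_lift \<Delta>) w1 (fsubst (up \<sigma>) (flift C))"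
    using exE.IH(2) ok_cons[OF ok_lift[OF exE.prems] f] by blast
  hence w1: "der ((x', fsubst (up \<sigma>) A) # ctx_lift \<Delta>) w1 (flift (fsubst \<sigma> C))"
    by (simp add: fsubst_flift)
  show ?case using der.exE[OF w0 w1] by blast
next
  case (ind \<Gamma> u A v t)
  obtain w0 where "der \<Delta> w0 (fsubst \<sigma> (fsubst (inst TZero) A))" using ind.IH(1)[OF ind.prems] by auto
  hence w0: "der \<Delta> w0 (fsubst (inst TZero) (fsubst (up \<sigma>) A))" by (simp add: fsubst_inst)
  obtain w1 where "der \<Delta> w1 (fsubst \<sigma> (FAll (FImp A (fsubst succ0 A))))" using ind.IH(2)[OF ind.prems] by blast
  hence w1: "der \<Delta> w1 (FAll (FImp (fsubst (up \<sigma>) A) (fsubst succ0 (fsubst (up \<sigma>) A))))"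
    by (simp add: fsubst_succ0)
  show ?case using der.ind[OF w0 w1, of "tsubst \<sigma> t"] by (auto simp: fsubst_inst)
next
  case (post us Ps \<Gamma> P)
  define ws where "ws = map (\<lambda>i. SOME w. der \<Delta> w (FAtom (asubst \<sigma> (Ps ! i)))) [0..<length us]"
  have "\<forall>i<length ws. der \<Delta> (ws ! i) (FAtom (map (asubst \<sigma>) Ps ! i))"
  proof (intro HOL.allI HOL.impI)
    fix i assume i: "i < length ws"
    hence il: "i < length us" by (simp add: ws_def)
    hence "der \<Gamma> (us ! i) (FAtom (Ps ! i)) \<and> (\<forall>\<Delta> r \<sigma>. ok \<Gamma> \<Delta> r \<sigma> \<longrightarrow> (\<exists>w. der \<Delta> w (fsubst \<sigma> (FAtom (Ps ! i)))))"
      using post.IH by simp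
    hence "\<exists>w. der \<Delta> w (FAtom (asubst \<sigma> (Ps ! i)))" using post.prems by auto
    hence "der \<Delta> (SOME w. der \<Delta> w (FAtom (asubst \<sigma> (Ps ! i)))) (FAtom (asubst \<sigma> (Ps ! i)))"
      by (rule someI_ex)
    thus "der \<Delta> (ws ! i) (FAtom (map (asubst \<sigma>) Ps ! i))" using il post.hyps(1) by (simp add: ws_def)
  qed
  moreover have "length ws = length (map (asubst \<sigma>) Ps)" using post.hyps(1) by (simp add: ws_def)
  ultimately have "der \<Delta> (PPost ws) (FAtom (asubst \<sigma> P))"
    using der.post post_subst[OF post.hyps(2)] by metis
  thus ?case by auto
next
  case (em1 a P \<Gamma> u C v)
  obtain a' where f: "a' \<notin> fst ` set \<Delta>" using ex_fresh by blast
  have o1: "ok ((a, FAll (FAtom P)) # \<Gamma>) ((a', fsubst \<sigma> (FAll (FAtom P)))#\<Delta>) (r(a:=a')) \<sigma>"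
    by (rule ok_cons[OF em1.prems f])
  have o2: "ok ((a, FEx (FAtom (compl P))) # \<Gamma>) ((a', fsubst \<sigma> (FEx (FAtom (compl P))))#\<Delta>) (r(a:=a')) \<sigma>"
    by (rule ok_cons[OF em1.prems f])
  obtain w1 where "der ((a', fsubst \<sigma> (FAll (FAtom P)))#\<Delta>) w1 (fsubst \<sigma> (FEx (FAtom C)))"
    using em1.IH(1)[OF o1] by blast
  hence w1: "der ((a', FAll (FAtom (asubst (up \<sigma>) P)))#\<Delta>) w1 (FEx (FAtom (asubst (up \<sigma>) C)))" by simp
  obtain w2 where "der ((a', fsubst \<sigma> (FEx (FAtom (compl P))))#\<Delta>) w2 (fsubst \<sigma> (FEx (FAtom C)))"
    using em1.IH(2)[OF o2] by blast
  hence w2: "der ((a', FEx (FAtom (compl (asubst (up \<sigma>) P))))#\<Delta>) w2 (FEx (FAtom (asubst (up \<sigma>) C)))"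
    by (simp add: asubst_compl)
  show ?case using der.em1[OF w1 w2] by auto
qed



lemma shift_ok: "ok \<Gamma> (ctx_lift \<Gamma>) id (\<lambda>n. TVar (Suc n))"
  unfolding ok_def by (auto simp: map_of_ctx_lift flift_def)

lemma der_lift: "der \<Gamma> w A \<Longrightarrow> \<exists>w'. der (ctx_lift \<Gamma>) w' (flift A)"
  using der_subst[OF _ shift_ok] by (simp add: flift_def)

lemma map_of_keys: "map_of (map (\<lambda>k. (k, f k)) ks) z = (if z \<in> set ks then Some (f z) else None)"
  by (induction ks) auto

lemma discharge: "der L w A \<Longrightarrow> (\<forall>(x,C)\<in>set L. \<exists>w. der [] w C) \<Longrightarrow> \<exists>w. der [] w A"
proof (induction L arbitrary: w A)
  case Nil thus ?case by blast
next
  case (Cons p L)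
  obtain x C where p: "p = (x, C)" by (cases p)
  have d: "der L (PLam x w) (FImp C A)" using Cons.prems(1) p by (auto intro: der.impI)
  have "\<forall>(x,C)\<in>set L. \<exists>w. der [] w C" using Cons.prems(2) by simp
  then obtain w1 where w1: "der [] w1 (FImp C A)" using Cons.IH[OF d] by blast
  obtain w0 where w0: "der [] w0 C" using Cons.prems(2) p by auto
  show ?case using der.impE[OF w1 w0] by blast
qed

lemma der_close:
  assumes "der \<Gamma> u A" and "\<forall>z B. map_of \<Gamma> z = Some B \<longrightarrow> (\<exists>w. der [] w (fsubst \<sigma> B))"
  shows "\<exists>w. der [] w (fsubst \<sigma> A)"
proof -
  define ks where "ks = remdups (map fst \<Gamma>)"
  define L where "L = map (\<lambda>k. (k, fsubst \<sigma> (the (map_of \<Gamma> k)))) ks"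
  have "ok \<Gamma> L id \<sigma>"
    unfolding ok_def L_def ks_def map_of_keys
    by (auto simp: weak_map_of_SomeI map_of_eq_None_iff)
  then obtain w where w: "der L w (fsubst \<sigma> A)" using der_subst[OF assms(1)] by blast
  have "\<forall>(x,C)\<in>set L. \<exists>w. der [] w C"
  proof
    fix p assume "p \<in> set L"
    then obtain k where k: "k \<in> set ks" "p = (k, fsubst \<sigma> (the (map_of \<Gamma> k)))" by (auto simp: L_def)
    then obtain B where "map_of \<Gamma> k = Some B" by (auto simp: ks_def dest: weak_map_of_SomeI intro: map_of_is_SomeI)
    thus "case p of (x, C) \<Rightarrow> \<exists>w. der [] w C" using assms(2) k by auto
  qed
  thus ?thesis using discharge[OF w] by blast
qed

section \<open>Equality reasoning\<close>

lemma tsubst_inst_tlift[simp]: "tsubst (inst x) (tlift c) = c"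
  by (simp add: tlift_def tsubst_tsubst tsubst_id)

lemma leib: "der \<Gamma> w1 (FAtom (Eq s t)) \<Longrightarrow> der \<Gamma> w2 (FAtom (asubst (inst s) Q)) \<Longrightarrow>
   der \<Gamma> (PPost [w1, w2]) (FAtom (asubst (inst t) Q))"
  by (rule der.post[of _ "[Eq s t, asubst (inst s) Q]"]) (auto simp: less_Suc_eq nth_Cons' intro: post_rule.leibniz)

lemma eq_refl: "der \<Gamma> (PPost []) (FAtom (Eq t t))"
  by (rule der.post) (auto intro: post_rule.refl)

lemma eq_sym: "der \<Gamma> w (FAtom (Eq a b)) \<Longrightarrow> \<exists>w'. der \<Gamma> w' (FAtom (Eq b a))"
proof -
  assume h: "der \<Gamma> w (FAtom (Eq a b))"
  have "der \<Gamma> (PPost []) (FAtom (asubst (inst a) (Eq (TVar 0) (tlift a))))"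
    using eq_refl by simp
  from leib[OF h this] show ?thesis by auto
qed

lemma eq_trans: "der \<Gamma> w (FAtom (Eq a b)) \<Longrightarrow> der \<Gamma> w' (FAtom (Eq b c)) \<Longrightarrow> \<exists>w''. der \<Gamma> w'' (FAtom (Eq a c))"
proof -
  assume h: "der \<Gamma> w (FAtom (Eq a b))" "der \<Gamma> w' (FAtom (Eq b c))"
  have "der \<Gamma> w (FAtom (asubst (inst b) (Eq (tlift a) (TVar 0))))" using h by simp
  from leib[OF h(2) this] show ?thesis by auto
qed

lemma neq_rw: "der \<Gamma> w (FAtom (Neq a b)) \<Longrightarrow> der \<Gamma> w1 (FAtom (Eq a a')) \<Longrightarrow> der \<Gamma> w2 (FAtom (Eq b b'))
  \<Longrightarrow> \<exists>w'. der \<Gamma> w' (FAtom (Neq a' b'))"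
proof -
  assume h: "der \<Gamma> w (FAtom (Neq a b))" "der \<Gamma> w1 (FAtom (Eq a a'))" "der \<Gamma> w2 (FAtom (Eq b b'))"
  have "der \<Gamma> w (FAtom (asubst (inst a) (Neq (TVar 0) (tlift b))))" using h by simp
  from leib[OF h(2) this] have "der \<Gamma> (PPost [w1, w]) (FAtom (asubst (inst b) (Neq (tlift a') (TVar 0))))" by simp
  from leib[OF h(3) this] show ?thesis by auto
qed

lemma cong_suc: "der \<Gamma> w (FAtom (Eq a b)) \<Longrightarrow> \<exists>w'. der \<Gamma> w' (FAtom (Eq (TSuc a) (TSuc b)))"
proof -
  assume h: "der \<Gamma> w (FAtom (Eq a b))"
  have "der \<Gamma> (PPost []) (FAtom (asubst (inst a) (Eq (TSuc (tlift a)) (TSuc (TVar 0)))))"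
    using eq_refl by simp
  from leib[OF h this] show ?thesis by auto
qed

lemma cong_plus: "der \<Gamma> w1 (FAtom (Eq a a')) \<Longrightarrow> der \<Gamma> w2 (FAtom (Eq b b')) \<Longrightarrow>
  \<exists>w'. der \<Gamma> w' (FAtom (Eq (TPlus a b) (TPlus a' b')))"
proof -
  assume h: "der \<Gamma> w1 (FAtom (Eq a a'))" "der \<Gamma> w2 (FAtom (Eq b b'))"
  have "der \<Gamma> (PPost []) (FAtom (asubst (inst a) (Eq (tlift (TPlus a b)) (TPlus (TVar 0) (tlift b)))))"
    using eq_refl by (simp add: tlift_def[symmetric])
  from leib[OF h(1) this]
  have "der \<Gamma> (PPost [w1, PPost []]) (FAtom (asubst (inst b) (Eq (tlift (TPlus a b)) (TPlus (tlift a') (TVar 0)))))"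
    by (simp add: tlift_def[symmetric])
  from leib[OF h(2) this] show ?thesis by (auto simp: tlift_def[symmetric])
qed

lemma cong_times: "der \<Gamma> w1 (FAtom (Eq a a')) \<Longrightarrow> der \<Gamma> w2 (FAtom (Eq b b')) \<Longrightarrow>
  \<exists>w'. der \<Gamma> w' (FAtom (Eq (TTimes a b) (TTimes a' b')))"
proof -
  assume h: "der \<Gamma> w1 (FAtom (Eq a a'))" "der \<Gamma> w2 (FAtom (Eq b b'))"
  have "der \<Gamma> (PPost []) (FAtom (asubst (inst a) (Eq (tlift (TTimes a b)) (TTimes (TVar 0) (tlift b)))))"
    using eq_refl by (simp add: tlift_def[symmetric])
  from leib[OF h(1) this]
  have "der \<Gamma> (PPost [w1, PPost []]) (FAtom (asubst (inst b) (Eq (tlift (TTimes a b)) (TTimes (tlift a') (TVar 0)))))"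
    by (simp add: tlift_def[symmetric])
  from leib[OF h(2) this] show ?thesis by (auto simp: tlift_def[symmetric])
qed



lemma tcong:
  "(\<forall>i\<in>tfv s. \<sigma> i = \<tau> i \<or> (\<exists>w. der [] w (FAtom (Eq (\<sigma> i) (\<tau> i))))) \<Longrightarrow>
   \<exists>w. der \<Gamma> w (FAtom (Eq (tsubst \<sigma> s) (tsubst \<tau> s)))"
proof (induction s)
  case (TVar n)
  thus ?case using eq_refl weaken_nil by (cases "\<sigma> n = \<tau> n") (auto, blast)
next
  case TZero thus ?case using eq_refl by auto
next
  case (TSuc s) thus ?case using cong_suc by fastforce
next
  case (TPlus s1 s2)
  then obtain w1 w2 where "der \<Gamma> w1 (FAtom (Eq (tsubst \<sigma> s1) (tsubst \<tau> s1)))"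
     "der \<Gamma> w2 (FAtom (Eq (tsubst \<sigma> s2) (tsubst \<tau> s2)))" by auto
  thus ?case using cong_plus by fastforce
next
  case (TTimes s1 s2)
  then obtain w1 w2 where "der \<Gamma> w1 (FAtom (Eq (tsubst \<sigma> s1) (tsubst \<tau> s1)))"
     "der \<Gamma> w2 (FAtom (Eq (tsubst \<sigma> s2) (tsubst \<tau> s2)))" by auto
  thus ?case using cong_times by fastforce
qed

definition R :: "(nat \<Rightarrow> trm) \<Rightarrow> (nat \<Rightarrow> trm) \<Rightarrow> bool" where
  "R \<sigma> \<tau> \<longleftrightarrow> (\<forall>i. \<sigma> i = \<tau> i \<or> (tfv (\<sigma> i) = {} \<and> tfv (\<tau> i) = {} \<and>
      (\<exists>w. der [] w (FAtom (Eq (\<sigma> i) (\<tau> i)))) \<and> (\<exists>w. der [] w (FAtom (Eq (\<tau> i) (\<sigma> i))))))"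

lemma R_sym: "R \<sigma> \<tau> \<Longrightarrow> R \<tau> \<sigma>"
  unfolding R_def by metis

lemma tlift_closed: "tfv c = {} \<Longrightarrow> tlift c = c"
  by (simp add: tlift_def tsubst_closed)

lemma R_up: "R \<sigma> \<tau> \<Longrightarrow> R (up \<sigma>) (up \<tau>)"
  unfolding R_def
proof (intro HOL.allI)
  fix i assume h: "\<forall>i. \<sigma> i = \<tau> i \<or> (tfv (\<sigma> i) = {} \<and> tfv (\<tau> i) = {} \<and>
      (\<exists>w. der [] w (FAtom (Eq (\<sigma> i) (\<tau> i)))) \<and> (\<exists>w. der [] w (FAtom (Eq (\<tau> i) (\<sigma> i)))))"
  show "up \<sigma> i = up \<tau> i \<or> (tfv (up \<sigma> i) = {} \<and> tfv (up \<tau> i) = {} \<and>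
      (\<exists>w. der [] w (FAtom (Eq (up \<sigma> i) (up \<tau> i)))) \<and> (\<exists>w. der [] w (FAtom (Eq (up \<tau> i) (up \<sigma> i)))))"
  proof (cases i)
    case 0 thus ?thesis by simp
  next
    case (Suc m)
    from h[rule_format, of m] show ?thesis
    proof
      assume "\<sigma> m = \<tau> m" thus ?thesis using Suc by simp
    next
      assume "tfv (\<sigma> m) = {} \<and> tfv (\<tau> m) = {} \<and>
      (\<exists>w. der [] w (FAtom (Eq (\<sigma> m) (\<tau> m)))) \<and> (\<exists>w. der [] w (FAtom (Eq (\<tau> m) (\<sigma> m))))"
      thus ?thesis using Suc by (simp add: tlift_closed)
    qed
  qed
qed

lemma R_tcong: "R \<sigma> \<tau> \<Longrightarrow> \<exists>w. der \<Gamma> w (FAtom (Eq (tsubst \<sigma> s) (tsubst \<tau> s)))"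
  unfolding R_def by (intro tcong) blast

lemma shift_inst0: "fsubst (inst (TVar 0)) (fsubst (up (\<lambda>n. TVar (Suc n))) X) = X"
proof -
  have "(\<lambda>i. tsubst (inst (TVar 0)) (up (\<lambda>n. TVar (Suc n)) i)) = TVar"
  proof
    fix i show "tsubst (inst (TVar 0)) (up (\<lambda>n. TVar (Suc n)) i) = TVar i"
      by (cases i) (auto simp: tlift_def)
  qed
  thus ?thesis by (simp add: fsubst_fsubst fsubst_id)
qed

lemma flift_All: "flift (FAll X) = FAll (fsubst (up (\<lambda>n. TVar (Suc n))) X)"
  by (simp add: flift_def)

lemma flift_Ex: "flift (FEx X) = FEx (fsubst (up (\<lambda>n. TVar (Suc n))) X)"
  by (simp add: flift_def)

lemma sub_fresh: "x \<notin> fst ` set \<Gamma> \<Longrightarrow> sub \<Gamma> ((x,C)#\<Gamma>)"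
  unfolding sub_def by (metis map_of_Cons_code(2) map_of_eq_None_iff option.distinct(1))

lemma fleib: "der \<Gamma> w (fsubst \<sigma> A) \<Longrightarrow> R \<sigma> \<tau> \<Longrightarrow> \<exists>w'. der \<Gamma> w' (fsubst \<tau> A)"
proof (induction A arbitrary: \<Gamma> w \<sigma> \<tau>)
  case (FAtom a)
  show ?case
  proof (cases a)
    case (Eq s t)
    obtain w1 where w1: "der \<Gamma> w1 (FAtom (Eq (tsubst \<sigma> s) (tsubst \<tau> s)))" using R_tcong[OF FAtom.prems(2)] by blast
    obtain w2 where w2: "der \<Gamma> w2 (FAtom (Eq (tsubst \<sigma> t) (tsubst \<tau> t)))" using R_tcong[OF FAtom.prems(2)] by blast
    have w: "der \<Gamma> w (FAtom (Eq (tsubst \<sigma> s) (tsubst \<sigma> t)))" using FAtom.prems(1) Eq by simp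
    obtain w3 where w3: "der \<Gamma> w3 (FAtom (Eq (tsubst \<tau> s) (tsubst \<sigma> s)))" using eq_sym[OF w1] by blast
    obtain w4 where w4: "der \<Gamma> w4 (FAtom (Eq (tsubst \<tau> s) (tsubst \<sigma> t)))" using eq_trans[OF w3 w] by blast
    obtain w5 where "der \<Gamma> w5 (FAtom (Eq (tsubst \<tau> s) (tsubst \<tau> t)))" using eq_trans[OF w4 w2] by blast
    thus ?thesis using Eq by auto
  next
    case (Neq s t)
    obtain w1 where w1: "der \<Gamma> w1 (FAtom (Eq (tsubst \<sigma> s) (tsubst \<tau> s)))" using R_tcong[OF FAtom.prems(2)] by blast
    obtain w2 where w2: "der \<Gamma> w2 (FAtom (Eq (tsubst \<sigma> t) (tsubst \<tau> t)))" using R_tcong[OF FAtom.prems(2)] by blast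
    have w: "der \<Gamma> w (FAtom (Neq (tsubst \<sigma> s) (tsubst \<sigma> t)))" using FAtom.prems(1) Neq by simp
    show ?thesis using neq_rw[OF w w1 w2] Neq by auto
  qed
next
  case (FConj A B)
  have "der \<Gamma> (PFst w) (fsubst \<sigma> A)" "der \<Gamma> (PSnd w) (fsubst \<sigma> B)"
    using FConj.prems(1) by (auto intro: der.conjE1 der.conjE2)
  then obtain w1 w2 where "der \<Gamma> w1 (fsubst \<tau> A)" "der \<Gamma> w2 (fsubst \<tau> B)"
    using FConj.IH FConj.prems(2) by blast
  thus ?case by (auto intro: der.conjI)
next
  case (FDisj A B)
  have "der ((0, fsubst \<sigma> A) # \<Gamma>) (PVar 0) (fsubst \<sigma> A)" by (auto intro: der.var)
  then obtain w1 where w1: "der ((0, fsubst \<sigma> A) # \<Gamma>) w1 (fsubst \<tau> A)" using FDisj.IH(1) FDisj.prems(2) by blast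
  have "der ((0, fsubst \<sigma> B) # \<Gamma>) (PVar 0) (fsubst \<sigma> B)" by (auto intro: der.var)
  then obtain w2 where w2: "der ((0, fsubst \<sigma> B) # \<Gamma>) w2 (fsubst \<tau> B)" using FDisj.IH(2) FDisj.prems(2) by blast
  have w0: "der \<Gamma> w (FDisj (fsubst \<sigma> A) (fsubst \<sigma> B))" using FDisj.prems(1) by simp
  have "der \<Gamma> (PCase w 0 (PInl w1) 0 (PInr w2)) (FDisj (fsubst \<tau> A) (fsubst \<tau> B))"
    by (rule der.disjE[OF w0]) (auto intro: der.disjI1 der.disjI2 w1 w2)
  thus ?case by auto
next
  case (FImp A B)
  obtain x where f: "x \<notin> fst ` set \<Gamma>" using ex_fresh by blast
  have "der ((x, fsubst \<tau> A) # \<Gamma>) (PVar x) (fsubst \<tau> A)" by (auto intro: der.var)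
  then obtain w1 where w1: "der ((x, fsubst \<tau> A) # \<Gamma>) w1 (fsubst \<sigma> A)"
    using FImp.IH(1) R_sym[OF FImp.prems(2)] by blast
  have "der ((x, fsubst \<tau> A) # \<Gamma>) w (FImp (fsubst \<sigma> A) (fsubst \<sigma> B))"
    using weaken[OF FImp.prems(1) sub_fresh[OF f]] by simp
  hence "der ((x, fsubst \<tau> A) # \<Gamma>) (PApp w w1) (fsubst \<sigma> B)" using w1 by (rule der.impE)
  then obtain w2 where "der ((x, fsubst \<tau> A) # \<Gamma>) w2 (fsubst \<tau> B)" using FImp.IH(2) FImp.prems(2) by blast
  thus ?case by (auto intro: der.impI)
next
  case (FAll A)
  obtain w1 where "der (ctx_lift \<Gamma>) w1 (flift (FAll (fsubst (up \<sigma>) A)))"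
    using der_lift FAll.prems(1) by fastforce
  hence "der (ctx_lift \<Gamma>) w1 (FAll (fsubst (up (\<lambda>n. TVar (Suc n))) (fsubst (up \<sigma>) A)))" by (simp add: flift_All)
  from der.allE[OF this, of "TVar 0"]
  have "der (ctx_lift \<Gamma>) (PAppI w1 (TVar 0)) (fsubst (up \<sigma>) A)" by (simp add: shift_inst0)
  then obtain w2 where "der (ctx_lift \<Gamma>) w2 (fsubst (up \<tau>) A)" using FAll.IH R_up[OF FAll.prems(2)] by blast
  thus ?case by (auto intro: der.allI)
next
  case (FEx A)
  have w0: "der \<Gamma> w (FEx (fsubst (up \<sigma>) A))" using FEx.prems(1) by simp
  have "der ((0, fsubst (up \<sigma>) A) # ctx_lift \<Gamma>) (PVar 0) (fsubst (up \<sigma>) A)" by (auto intro: der.var)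
  then obtain w1 where w1: "der ((0, fsubst (up \<sigma>) A) # ctx_lift \<Gamma>) w1 (fsubst (up \<tau>) A)"
    using FEx.IH R_up[OF FEx.prems(2)] by blast
  have "der ((0, fsubst (up \<sigma>) A) # ctx_lift \<Gamma>) w1
      (fsubst (inst (TVar 0)) (fsubst (up (\<lambda>n. TVar (Suc n))) (fsubst (up \<tau>) A)))"
    using w1 by (simp add: shift_inst0)
  hence "der ((0, fsubst (up \<sigma>) A) # ctx_lift \<Gamma>) (PPairI (TVar 0) w1) (flift (FEx (fsubst (up \<tau>) A)))"
    unfolding flift_Ex by (rule der.exI)
  from der.exE[OF w0 this] show ?case by auto
qed



primrec num :: "nat \<Rightarrow> trm" where
  "num 0 = TZero"
| "num (Suc n) = TSuc (num n)"

lemma tfv_num[simp]: "tfv (num n) = {}"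
  by (induction n) auto

lemma teval_num[simp]: "teval e (num n) = n"
  by (induction n) auto

lemma asubst_id: "asubst TVar a = a"
  by (cases a) (auto simp: tsubst_id)

lemma asubst_closed: "afv a = {} \<Longrightarrow> asubst \<sigma> a = a"
  using asubst_cong[of a \<sigma> TVar] asubst_id by auto

lemma afv_compl[simp]: "afv (compl a) = afv a"
  by (cases a) auto

lemma plus_num: "\<exists>w. der \<Gamma> w (FAtom (Eq (TPlus (num n) (num m)) (num (n+m))))"
proof (induction m)
  case 0
  have "der \<Gamma> (PPost []) (FAtom (Eq (TPlus (num n) TZero) (num n)))"
    by (rule der.post) (auto intro: post_rule.plus_zero)
  thus ?case by auto
next
  case (Suc m)
  have a: "der \<Gamma> (PPost []) (FAtom (Eq (TPlus (num n) (TSuc (num m))) (TSuc (TPlus (num n) (num m)))))"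
    by (rule der.post) (auto intro: post_rule.plus_suc)
  obtain w where "der \<Gamma> w (FAtom (Eq (TPlus (num n) (num m)) (num (n+m))))" using Suc by blast
  then obtain w' where "der \<Gamma> w' (FAtom (Eq (TSuc (TPlus (num n) (num m))) (TSuc (num (n+m)))))"
    using cong_suc by blast
  from eq_trans[OF a this] show ?case by auto
qed

lemma times_num: "\<exists>w. der \<Gamma> w (FAtom (Eq (TTimes (num n) (num m)) (num (n*m))))"
proof (induction m)
  case 0
  have "der \<Gamma> (PPost []) (FAtom (Eq (TTimes (num n) TZero) TZero))"
    by (rule der.post) (auto intro: post_rule.times_zero)
  thus ?case by auto
next
  case (Suc m)
  have a: "der \<Gamma> (PPost []) (FAtom (Eq (TTimes (num n) (TSuc (num m))) (TPlus (TTimes (num n) (num m)) (num n))))"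
    by (rule der.post) (auto intro: post_rule.times_suc)
  obtain w where "der \<Gamma> w (FAtom (Eq (TTimes (num n) (num m)) (num (n*m))))" using Suc by blast
  then obtain w' where "der \<Gamma> w' (FAtom (Eq (TPlus (TTimes (num n) (num m)) (num n)) (TPlus (num (n*m)) (num n))))"
    using cong_plus[OF _ eq_refl] by blast
  from eq_trans[OF a this] obtain w2 where
    b: "der \<Gamma> w2 (FAtom (Eq (TTimes (num n) (TSuc (num m))) (TPlus (num (n*m)) (num n))))" by blast
  obtain w3 where "der \<Gamma> w3 (FAtom (Eq (TPlus (num (n*m)) (num n)) (num (n*m+n))))" using plus_num by blast
  from eq_trans[OF b this] have "\<exists>w. der \<Gamma> w (FAtom (Eq (TTimes (num n) (TSuc (num m))) (num (n*m+n))))" by blast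
  thus ?case by (simp add: add.commute)
qed

lemma eval_num: "tfv t = {} \<Longrightarrow> \<exists>w. der \<Gamma> w (FAtom (Eq t (num (teval e t))))"
proof (induction t)
  case (TVar n) thus ?case by simp
next
  case TZero thus ?case using eq_refl by fastforce
next
  case (TSuc t) thus ?case using cong_suc by fastforce
next
  case (TPlus t1 t2)
  then obtain w1 w2 where "der \<Gamma> w1 (FAtom (Eq t1 (num (teval e t1))))" "der \<Gamma> w2 (FAtom (Eq t2 (num (teval e t2))))" by auto
  then obtain w where w: "der \<Gamma> w (FAtom (Eq (TPlus t1 t2) (TPlus (num (teval e t1)) (num (teval e t2)))))"
    using cong_plus by blast
  obtain w' where "der \<Gamma> w' (FAtom (Eq (TPlus (num (teval e t1)) (num (teval e t2))) (num (teval e t1 + teval e t2))))"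
    using plus_num by blast
  from eq_trans[OF w this] show ?case by auto
next
  case (TTimes t1 t2)
  then obtain w1 w2 where "der \<Gamma> w1 (FAtom (Eq t1 (num (teval e t1))))" "der \<Gamma> w2 (FAtom (Eq t2 (num (teval e t2))))" by auto
  then obtain w where w: "der \<Gamma> w (FAtom (Eq (TTimes t1 t2) (TTimes (num (teval e t1)) (num (teval e t2)))))"
    using cong_times by blast
  obtain w' where "der \<Gamma> w' (FAtom (Eq (TTimes (num (teval e t1)) (num (teval e t2))) (num (teval e t1 * teval e t2))))"
    using times_num by blast
  from eq_trans[OF w this] show ?case by auto
qed

lemma taut_contra: "der \<Gamma> w1 (FAtom Q) \<Longrightarrow> der \<Gamma> w2 (FAtom (compl Q)) \<Longrightarrow> \<exists>w. der \<Gamma> w (FAtom X)"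
proof -
  assume h: "der \<Gamma> w1 (FAtom Q)" "der \<Gamma> w2 (FAtom (compl Q))"
  have "post_rule [Q, compl Q] X"
    by (rule post_rule.taut) auto
  hence "der \<Gamma> (PPost [w1, w2]) (FAtom X)"
    by (rule der.post[rotated 2]) (use h in \<open>auto simp: less_Suc_eq nth_Cons'\<close>)
  thus ?thesis by blast
qed

lemma taut_contra_eq: "der \<Gamma> w1 (FAtom (Eq a b)) \<Longrightarrow> der \<Gamma> w2 (FAtom (Neq a b)) \<Longrightarrow> \<exists>w. der \<Gamma> w (FAtom X)"
  using taut_contra[of \<Gamma> w1 "Eq a b" w2 X] by simp

lemma gadget:
  assumes c: "afv P = {}" and w: "der [(y, FAtom P)] w (FAtom (compl P))"
  shows "\<exists>w. der [] w (FAtom (compl P))"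
proof -
  have "der [(0, FAll (FAtom P))] (PHyp 0) (FAll (FAtom P))" by (rule der.hyp) simp
  from der.allE[OF this, of TZero]
  have p: "der [(0, FAll (FAtom P))] (PAppI (PHyp 0) TZero) (FAtom P)" by (simp add: asubst_closed c)
  have "der [] (PLam y w) (FImp (FAtom P) (FAtom (compl P)))" using w by (rule der.impI)
  hence "der [(0, FAll (FAtom P))] (PLam y w) (FImp (FAtom P) (FAtom (compl P)))" by (rule weaken_nil)
  from der.impE[OF this p]
  have "der [(0, FAll (FAtom P))] (PApp (PLam y w) (PAppI (PHyp 0) TZero)) (fsubst (inst TZero) (FAtom (compl P)))"
    by (simp add: asubst_closed c)
  hence b1: "der [(0, FAll (FAtom P))] (PPairI TZero (PApp (PLam y w) (PAppI (PHyp 0) TZero))) (FEx (FAtom (compl P)))"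
    by (rule der.exI)
  have b2: "der [(0, FEx (FAtom (compl P)))] (PWit 0) (FEx (FAtom (compl P)))" by (rule der.wit) simp
  note e = der.em1[OF b1 b2]
  have "der ((0, FAtom (compl P)) # ctx_lift []) (PVar 0) (flift (FAtom (compl P)))"
    by (rule der.var) (simp add: flift_def asubst_closed c)
  from der.exE[OF e this] show ?thesis by blast
qed

lemma suc_inj_der: "der \<Gamma> w (FAtom (Eq (TSuc a) (TSuc b))) \<Longrightarrow> der \<Gamma> (PPost [w]) (FAtom (Eq a b))"
  by (rule der.post[of _ "[Eq (TSuc a) (TSuc b)]"]) (auto intro: post_rule.suc_inj)

lemma neq_num_gt: "j < i \<Longrightarrow> \<exists>w. der [] w (FAtom (Neq (num i) (num j)))"
proof (induction j arbitrary: i)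
  case 0
  then obtain k where "i = Suc k" by (cases i) auto
  moreover have "der [] (PPost []) (FAtom (Neq (TSuc (num k)) TZero))"
    by (rule der.post) (auto intro: post_rule.suc_ne_zero)
  ultimately show ?case by auto
next
  case (Suc j)
  then obtain k where k: "i = Suc k" "j < k" by (cases i) auto
  obtain w0 where w0: "der [] w0 (FAtom (Neq (num k) (num j)))" using Suc.IH[OF k(2)] by blast
  let ?P = "Eq (num (Suc k)) (num (Suc j))"
  have "der [(0, FAtom ?P)] (PVar 0) (FAtom ?P)" by (rule der.var) simp
  hence "der [(0, FAtom ?P)] (PPost [PVar 0]) (FAtom (Eq (num k) (num j)))" by (intro suc_inj_der) simp
  from taut_contra_eq[OF this weaken_nil[OF w0]]
  obtain w where "der [(0, FAtom ?P)] w (FAtom (compl ?P))" by blast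
  from gadget[OF _ this] show ?case using k by simp
qed

lemma neq_sym_closed:
  assumes "tfv a = {}" "tfv b = {}" "der [] w (FAtom (Neq a b))"
  shows "\<exists>w. der [] w (FAtom (Neq b a))"
proof -
  let ?P = "Eq b a"
  have "der [(0, FAtom ?P)] (PVar 0) (FAtom ?P)" by (rule der.var) simp
  then obtain w1 where "der [(0, FAtom ?P)] w1 (FAtom (Eq a b))" using eq_sym by blast
  from taut_contra_eq[OF this weaken_nil[OF assms(3)]]
  obtain w where "der [(0, FAtom ?P)] w (FAtom (compl ?P))" by blast
  from gadget[OF _ this] show ?thesis using assms by simp
qed

lemma neq_num: "i \<noteq> j \<Longrightarrow> \<exists>w. der [] w (FAtom (Neq (num i) (num j)))"
proof (cases "j < i")
  case True thus ?thesis by (rule neq_num_gt)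
next
  case False
  assume "i \<noteq> j" hence "i < j" using False by simp
  then obtain w where "der [] w (FAtom (Neq (num j) (num i)))" using neq_num_gt by blast
  thus ?thesis using neq_sym_closed by simp
qed

lemma true_atom:
  assumes "afv a = {}" "aeval e a"
  shows "\<exists>w. der [] w (FAtom a)"
proof (cases a)
  case (Eq s t)
  hence c: "tfv s = {}" "tfv t = {}" and v: "teval e s = teval e t" using assms by auto
  obtain w1 where w1: "der [] w1 (FAtom (Eq s (num (teval e s))))" using eval_num[OF c(1)] by blast
  obtain w2 where "der [] w2 (FAtom (Eq t (num (teval e s))))" using eval_num[OF c(2)] v by metis
  then obtain w3 where "der [] w3 (FAtom (Eq (num (teval e s)) t))" using eq_sym by blast
  from eq_trans[OF w1 this] show ?thesis using Eq by simp
next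
  case (Neq s t)
  hence c: "tfv s = {}" "tfv t = {}" and v: "teval e s \<noteq> teval e t" using assms by auto
  obtain w1 where "der [] w1 (FAtom (Eq s (num (teval e s))))" using eval_num[OF c(1)] by blast
  then obtain w1' where w1: "der [] w1' (FAtom (Eq (num (teval e s)) s))" using eq_sym by blast
  obtain w2 where "der [] w2 (FAtom (Eq t (num (teval e t))))" using eval_num[OF c(2)] by blast
  then obtain w2' where w2: "der [] w2' (FAtom (Eq (num (teval e t)) t))" using eq_sym by blast
  obtain w where w: "der [] w (FAtom (Neq (num (teval e s)) (num (teval e t))))" using neq_num[OF v] by blast
  from neq_rw[OF w w1 w2] show ?thesis using Neq by simp
qed



definition cl :: "(nat \<Rightarrow> trm) \<Rightarrow> bool" where
  "cl \<rho> \<longleftrightarrow> (\<forall>i. tfv (\<rho> i) = {})"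

definition cv :: "(nat \<Rightarrow> trm) \<Rightarrow> nat \<Rightarrow> nat" where
  "cv \<rho> = (\<lambda>i. teval (\<lambda>_. 0) (\<rho> i))"

definition DD :: "(nat \<Rightarrow> trm) \<Rightarrow> fm \<Rightarrow> bool" where
  "DD \<rho> A \<longleftrightarrow> (\<exists>w. der [] w (fsubst \<rho> A))"

definition HH :: "(nat \<Rightarrow> trm) \<Rightarrow> fm \<Rightarrow> bool" where
  "HH \<rho> A \<longleftrightarrow> holds (cv \<rho>) A"

primrec SS :: "fm \<Rightarrow> (nat \<Rightarrow> trm) \<Rightarrow> bool" where
  "SS (FAtom a) \<rho> = aeval (cv \<rho>) a"
| "SS (FConj A B) \<rho> = (SS A \<rho> \<and> SS B \<rho>)"
| "SS (FDisj A B) \<rho> = ((DD \<rho> A \<and> SS A \<rho> \<and> HH \<rho> A) \<or> (DD \<rho> B \<and> SS B \<rho> \<and> HH \<rho> B))"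
| "SS (FImp A B) \<rho> = (DD \<rho> A \<longrightarrow> SS A \<rho> \<longrightarrow> HH \<rho> A \<longrightarrow> SS B \<rho>)"
| "SS (FAll A) \<rho> = (\<forall>t. tfv t = {} \<longrightarrow> SS A (case_nat t \<rho>))"
| "SS (FEx A) \<rho> = (\<exists>t. tfv t = {} \<and> DD (case_nat t \<rho>) A \<and> SS A (case_nat t \<rho>) \<and> HH (case_nat t \<rho>) A)"

lemma cl_cons: "cl \<rho> \<Longrightarrow> tfv t = {} \<Longrightarrow> cl (case_nat t \<rho>)"
  unfolding cl_def by (auto split: nat.split)

lemma cl_tsubst: "cl \<rho> \<Longrightarrow> tfv (tsubst \<rho> t) = {}"
  unfolding cl_def by (simp add: tfv_tsubst)

lemma cl_comp: "cl \<rho> \<Longrightarrow> cl (\<lambda>i. tsubst \<rho> (\<sigma> i))"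
  unfolding cl_def by (simp add: tfv_tsubst)

lemma cv_comp: "cv (\<lambda>i. tsubst \<rho> (\<sigma> i)) = (\<lambda>i. teval (cv \<rho>) (\<sigma> i))"
  unfolding cv_def by (simp add: teval_tsubst)

lemma cv_cons: "cv (case_nat t \<rho>) = case_nat (teval (\<lambda>_. 0) t) (cv \<rho>)"
  unfolding cv_def by (rule ext) (simp split: nat.split)

lemma DD_subst: "DD \<rho> (fsubst \<sigma> A) = DD (\<lambda>i. tsubst \<rho> (\<sigma> i)) A"
  unfolding DD_def by (simp add: fsubst_fsubst)

lemma HH_subst: "HH \<rho> (fsubst \<sigma> A) = HH (\<lambda>i. tsubst \<rho> (\<sigma> i)) A"
  unfolding HH_def by (simp add: holds_fsubst cv_comp)

lemma cons_up: "(\<lambda>i. tsubst (case_nat t \<rho>) (up \<sigma> i)) = case_nat t (\<lambda>i. tsubst \<rho> (\<sigma> i))"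
proof
  fix i show "tsubst (case_nat t \<rho>) (up \<sigma> i) = case_nat t (\<lambda>i. tsubst \<rho> (\<sigma> i)) i"
    by (cases i) (auto simp: tlift_def tsubst_tsubst)
qed

lemma SS_subst: "cl \<rho> \<Longrightarrow> SS (fsubst \<sigma> A) \<rho> = SS A (\<lambda>i. tsubst \<rho> (\<sigma> i))"
proof (induction A arbitrary: \<rho> \<sigma>)
  case (FAtom a) thus ?case by (simp add: aeval_asubst cv_comp)
next
  case (FConj A B) thus ?case by simp
next
  case (FDisj A B) thus ?case by (simp add: DD_subst HH_subst)
next
  case (FImp A B) thus ?case by (simp add: DD_subst HH_subst)
next
  case (FAll A)
  have "\<And>t. tfv t = {} \<Longrightarrow> SS (fsubst (up \<sigma>) A) (case_nat t \<rho>) = SS A (case_nat t (\<lambda>i. tsubst \<rho> (\<sigma> i)))"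
    using FAll.IH cl_cons[OF FAll.prems] by (simp add: cons_up)
  thus ?case by simp
next
  case (FEx A)
  have "\<And>t. tfv t = {} \<Longrightarrow> SS (fsubst (up \<sigma>) A) (case_nat t \<rho>) = SS A (case_nat t (\<lambda>i. tsubst \<rho> (\<sigma> i)))"
    using FEx.IH cl_cons[OF FEx.prems] by (simp add: cons_up)
  hence "\<And>t. tfv t = {} \<Longrightarrow> (DD (case_nat t (\<lambda>i. tsubst \<rho> (\<sigma> i))) A \<and> SS (fsubst (up \<sigma>) A) (case_nat t \<rho>) \<and> HH (case_nat t (\<lambda>i. tsubst \<rho> (\<sigma> i))) A) =
     (DD (case_nat t (\<lambda>i. tsubst \<rho> (\<sigma> i))) A \<and> SS A (case_nat t (\<lambda>i. tsubst \<rho> (\<sigma> i))) \<and> HH (case_nat t (\<lambda>i. tsubst \<rho> (\<sigma> i))) A)"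
    by simp
  thus ?case by (simp add: DD_subst HH_subst cons_up) blast
qed

lemma DD_inv: "cl \<rho> \<Longrightarrow> cl \<rho>' \<Longrightarrow> cv \<rho> = cv \<rho>' \<Longrightarrow> DD \<rho> A \<Longrightarrow> DD \<rho>' A"
proof -
  assume c: "cl \<rho>" "cl \<rho>'" and v: "cv \<rho> = cv \<rho>'" and d: "DD \<rho> A"
  have "R \<rho> \<rho>'" unfolding R_def
  proof (rule HOL.allI)
    fix i
    have t: "tfv (\<rho> i) = {}" "tfv (\<rho>' i) = {}" using c by (auto simp: cl_def)
    have e: "teval (\<lambda>_. 0) (\<rho> i) = teval (\<lambda>_. 0) (\<rho>' i)" using v unfolding cv_def by metis
    have 1: "\<exists>w. der [] w (FAtom (Eq (\<rho> i) (\<rho>' i)))"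
      by (rule true_atom[where e="\<lambda>_. 0"]) (use t e in auto)
    have 2: "\<exists>w. der [] w (FAtom (Eq (\<rho>' i) (\<rho> i)))"
      by (rule true_atom[where e="\<lambda>_. 0"]) (use t e in auto)
    show "\<rho> i = \<rho>' i \<or> (tfv (\<rho> i) = {} \<and> tfv (\<rho>' i) = {} \<and>
      (\<exists>w. der [] w (FAtom (Eq (\<rho> i) (\<rho>' i)))) \<and> (\<exists>w. der [] w (FAtom (Eq (\<rho>' i) (\<rho> i)))))"
      using t 1 2 by blast
  qed
  thus ?thesis using d fleib unfolding DD_def by blast
qed

lemma SS_inv: "cl \<rho> \<Longrightarrow> cl \<rho>' \<Longrightarrow> cv \<rho> = cv \<rho>' \<Longrightarrow> SS A \<rho> = SS A \<rho>'"
proof (induction A arbitrary: \<rho> \<rho>')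
  case (FAtom a) thus ?case by simp
next
  case (FConj A B)
  have "SS A \<rho> = SS A \<rho>'" "SS B \<rho> = SS B \<rho>'" using FConj.IH FConj.prems by blast+
  thus ?case by simp
next
  case (FDisj A B)
  have "DD \<rho> A = DD \<rho>' A" "DD \<rho> B = DD \<rho>' B"
    using DD_inv[OF FDisj.prems] DD_inv[OF FDisj.prems(2,1) FDisj.prems(3)[symmetric]] by blast+
  moreover have "HH \<rho> A = HH \<rho>' A" "HH \<rho> B = HH \<rho>' B" using FDisj.prems(3) by (auto simp: HH_def)
  moreover have "SS A \<rho> = SS A \<rho>'" "SS B \<rho> = SS B \<rho>'" using FDisj.IH FDisj.prems by blast+
  ultimately show ?case by simp
next
  case (FImp A B)
  have "DD \<rho> A = DD \<rho>' A"
    using DD_inv[OF FImp.prems] DD_inv[OF FImp.prems(2,1) FImp.prems(3)[symmetric]] by blast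
  moreover have "HH \<rho> A = HH \<rho>' A" using FImp.prems(3) by (auto simp: HH_def)
  moreover have "SS A \<rho> = SS A \<rho>'" "SS B \<rho> = SS B \<rho>'" using FImp.IH FImp.prems by blast+
  ultimately show ?case by simp
next
  case (FAll A)
  have "SS A (case_nat t \<rho>) = SS A (case_nat t \<rho>')" if t: "tfv t = {}" for t
  proof (rule FAll.IH)
    show "cl (case_nat t \<rho>)" "cl (case_nat t \<rho>')" using cl_cons t FAll.prems by blast+
    show "cv (case_nat t \<rho>) = cv (case_nat t \<rho>')" using FAll.prems(3) by (simp add: cv_cons)
  qed
  thus ?case by simp
next
  case (FEx A)
  have s: "SS A (case_nat t \<rho>) = SS A (case_nat t \<rho>')" 
    and d: "DD (case_nat t \<rho>) A = DD (case_nat t \<rho>') A" if t: "tfv t = {}" for t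
  proof -
    have c: "cl (case_nat t \<rho>)" "cl (case_nat t \<rho>')" using cl_cons t FEx.prems by blast+
    have v: "cv (case_nat t \<rho>) = cv (case_nat t \<rho>')" using FEx.prems(3) by (simp add: cv_cons)
    show "SS A (case_nat t \<rho>) = SS A (case_nat t \<rho>')" by (rule FEx.IH[OF c v])
    show "DD (case_nat t \<rho>) A = DD (case_nat t \<rho>') A"
      using DD_inv[OF c v] DD_inv[OF c(2,1) v[symmetric]] by blast
  qed
  have h: "HH (case_nat t \<rho>) A = HH (case_nat t \<rho>') A" for t
    using FEx.prems(3) by (simp add: HH_def cv_cons)
  show ?case
  proof
    assume "SS (FEx A) \<rho>"
    then obtain t where "tfv t = {}" "DD (case_nat t \<rho>) A" "SS A (case_nat t \<rho>)" "HH (case_nat t \<rho>) A" by auto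
    thus "SS (FEx A) \<rho>'" using s d h by auto
  next
    assume "SS (FEx A) \<rho>'"
    then obtain t where "tfv t = {}" "DD (case_nat t \<rho>') A" "SS A (case_nat t \<rho>')" "HH (case_nat t \<rho>') A" by auto
    thus "SS (FEx A) \<rho>" using s d h by auto
  qed
qed

lemma DD_lemma: "der \<Gamma> u A \<Longrightarrow> \<forall>x B. map_of \<Gamma> x = Some B \<longrightarrow> DD \<rho> B \<Longrightarrow> DD \<rho> A"
  unfolding DD_def by (rule der_close)

lemma HH_lemma: "der \<Gamma> u A \<Longrightarrow> \<forall>x B. map_of \<Gamma> x = Some B \<longrightarrow> HH \<rho> B \<Longrightarrow> HH \<rho> A"
  unfolding HH_def by (rule classical_sound)

definition good :: "(nat \<times> fm) list \<Rightarrow> (nat \<Rightarrow> trm) \<Rightarrow> bool" where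
  "good \<Gamma> \<rho> \<longleftrightarrow> (\<forall>x B. map_of \<Gamma> x = Some B \<longrightarrow> DD \<rho> B \<and> SS B \<rho> \<and> HH \<rho> B)"

lemma good_D: "good \<Gamma> \<rho> \<Longrightarrow> \<forall>x B. map_of \<Gamma> x = Some B \<longrightarrow> DD \<rho> B"
  and good_H: "good \<Gamma> \<rho> \<Longrightarrow> \<forall>x B. map_of \<Gamma> x = Some B \<longrightarrow> HH \<rho> B"
  unfolding good_def by blast+

lemma good_cons: "good \<Gamma> \<rho> \<Longrightarrow> DD \<rho> A \<Longrightarrow> SS A \<rho> \<Longrightarrow> HH \<rho> A \<Longrightarrow> good ((x,A)#\<Gamma>) \<rho>"
  unfolding good_def by auto

lemma shift_cons: "(\<lambda>i. tsubst (case_nat t \<rho>) (TVar (Suc i))) = \<rho>"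
  by auto

lemma good_lift: "good \<Gamma> \<rho> \<Longrightarrow> cl \<rho> \<Longrightarrow> tfv t = {} \<Longrightarrow> good (ctx_lift \<Gamma>) (case_nat t \<rho>)"
  unfolding good_def
proof (intro HOL.allI HOL.impI)
  fix x B assume g: "\<forall>x B. map_of \<Gamma> x = Some B \<longrightarrow> DD \<rho> B \<and> SS B \<rho> \<and> HH \<rho> B"
    and c: "cl \<rho>" "tfv t = {}" and m: "map_of (ctx_lift \<Gamma>) x = Some B"
  then obtain B' where "map_of \<Gamma> x = Some B'" "B = flift B'" by (auto simp: map_of_ctx_lift)
  with g show "DD (case_nat t \<rho>) B \<and> SS B (case_nat t \<rho>) \<and> HH (case_nat t \<rho>) B"
    unfolding flift_def using SS_subst[OF cl_cons[OF c]] DD_subst HH_subst shift_cons by metis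
qed

lemma inst_cons: "(\<lambda>i. tsubst \<rho> (inst t i)) = case_nat (tsubst \<rho> t) \<rho>"
  by (rule ext) (simp add: inst_def split: nat.split)

lemma succ0_cons: "(\<lambda>i. tsubst (case_nat t \<rho>) (succ0 i)) = case_nat (TSuc t) \<rho>"
  by (rule ext) (simp add: succ0_def split: nat.split)

lemma afv_asubst_cl: "cl \<rho> \<Longrightarrow> afv (asubst \<rho> a) = {}"
  by (cases a) (auto simp: cl_tsubst)

lemma tsubst_num[simp]: "tsubst \<sigma> (num n) = num n"
  by (simp add: tsubst_closed)

lemma slash_sound: "der \<Gamma> u A \<Longrightarrow> cl \<rho> \<Longrightarrow> good \<Gamma> \<rho> \<Longrightarrow> SS A \<rho>"
proof (induction arbitrary: \<rho> rule: der.induct)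
  case (var \<Gamma> x A) thus ?case unfolding good_def by blast
next
  case (hyp \<Gamma> a P) thus ?case unfolding good_def by blast
next
  case (wit \<Gamma> a P) thus ?case unfolding good_def by blast
next
  case (conjI \<Gamma> u A v B) thus ?case by simp
next
  case (conjE1 \<Gamma> u A B)
  have "SS (FConj A B) \<rho>" by (rule conjE1.IH[OF conjE1.prems])
  thus ?case by simp
next
  case (conjE2 \<Gamma> u A B)
  have "SS (FConj A B) \<rho>" by (rule conjE2.IH[OF conjE2.prems])
  thus ?case by simp
next
  case (impI x A \<Gamma> u B)
  show ?case
  proof (simp, intro HOL.impI)
    assume "DD \<rho> A" "SS A \<rho>" "HH \<rho> A"
    from good_cons[OF impI.prems(2) this] show "SS B \<rho>" by (rule impI.IH[OF impI.prems(1)])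
  qed
next
  case (impE \<Gamma> u A B v)
  have "SS (FImp A B) \<rho>" by (rule impE.IH(1)[OF impE.prems])
  moreover have "DD \<rho> A" using DD_lemma[OF impE.hyps(2) good_D[OF impE.prems(2)]] .
  moreover have "HH \<rho> A" using HH_lemma[OF impE.hyps(2) good_H[OF impE.prems(2)]] .
  moreover have "SS A \<rho>" by (rule impE.IH(2)[OF impE.prems])
  ultimately show ?case by simp
next
  case (disjI1 \<Gamma> u A B)
  have "DD \<rho> A" using DD_lemma[OF disjI1.hyps good_D[OF disjI1.prems(2)]] .
  moreover have "HH \<rho> A" using HH_lemma[OF disjI1.hyps good_H[OF disjI1.prems(2)]] .
  moreover have "SS A \<rho>" by (rule disjI1.IH[OF disjI1.prems])
  ultimately show ?case by simp
next
  case (disjI2 \<Gamma> u B A)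
  have "DD \<rho> B" using DD_lemma[OF disjI2.hyps good_D[OF disjI2.prems(2)]] .
  moreover have "HH \<rho> B" using HH_lemma[OF disjI2.hyps good_H[OF disjI2.prems(2)]] .
  moreover have "SS B \<rho>" by (rule disjI2.IH[OF disjI2.prems])
  ultimately show ?case by simp
next
  case (disjE \<Gamma> u A B x v C y w)
  have "SS (FDisj A B) \<rho>" by (rule disjE.IH(1)[OF disjE.prems])
  hence "(DD \<rho> A \<and> SS A \<rho> \<and> HH \<rho> A) \<or> (DD \<rho> B \<and> SS B \<rho> \<and> HH \<rho> B)" by simp
  thus ?case
  proof
    assume "DD \<rho> A \<and> SS A \<rho> \<and> HH \<rho> A"
    hence "good ((x, A) # \<Gamma>) \<rho>" using good_cons[OF disjE.prems(2)] by blast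
    thus ?case by (rule disjE.IH(2)[OF disjE.prems(1)])
  next
    assume "DD \<rho> B \<and> SS B \<rho> \<and> HH \<rho> B"
    hence "good ((y, B) # \<Gamma>) \<rho>" using good_cons[OF disjE.prems(2)] by blast
    thus ?case by (rule disjE.IH(3)[OF disjE.prems(1)])
  qed
next
  case (allI \<Gamma> u A)
  show ?case
  proof (simp, intro HOL.allI HOL.impI)
    fix t :: trm assume t: "tfv t = {}"
    show "SS A (case_nat t \<rho>)"
      by (rule allI.IH[OF cl_cons[OF allI.prems(1) t] good_lift[OF allI.prems(2) allI.prems(1) t]])
  qed
next
  case (allE \<Gamma> u A t)
  have "SS (FAll A) \<rho>" by (rule allE.IH[OF allE.prems])
  hence "SS A (case_nat (tsubst \<rho> t) \<rho>)" using cl_tsubst[OF allE.prems(1)] by simp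
  thus ?case by (simp add: SS_subst[OF allE.prems(1)] inst_cons)
next
  case (exI \<Gamma> u t A)
  have "DD \<rho> (fsubst (inst t) A)" using DD_lemma[OF exI.hyps good_D[OF exI.prems(2)]] .
  moreover have "HH \<rho> (fsubst (inst t) A)" using HH_lemma[OF exI.hyps good_H[OF exI.prems(2)]] .
  moreover have "SS (fsubst (inst t) A) \<rho>" by (rule exI.IH[OF exI.prems])
  ultimately show ?case using cl_tsubst[OF exI.prems(1), of t]
    by (auto simp: SS_subst[OF exI.prems(1)] DD_subst HH_subst inst_cons)
next
  case (exE \<Gamma> u A x v C)
  have "SS (FEx A) \<rho>" by (rule exE.IH(1)[OF exE.prems])
  then obtain t where t: "tfv t = {}" "DD (case_nat t \<rho>) A" "SS A (case_nat t \<rho>)" "HH (case_nat t \<rho>) A" by auto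
  have c: "cl (case_nat t \<rho>)" by (rule cl_cons[OF exE.prems(1) t(1)])
  have "good ((x, A) # ctx_lift \<Gamma>) (case_nat t \<rho>)"
    by (rule good_cons[OF good_lift[OF exE.prems(2) exE.prems(1) t(1)] t(2-4)])
  hence "SS (flift C) (case_nat t \<rho>)" by (rule exE.IH(2)[OF c])
  thus ?case unfolding flift_def using SS_subst[OF c] shift_cons by metis
next
  case (ind \<Gamma> u A v t)
  have n: "SS A (case_nat (num n) \<rho>)" for n
  proof (induction n)
    case 0
    have "SS (fsubst (inst TZero) A) \<rho>" by (rule ind.IH(1)[OF ind.prems])
    hence "SS A (case_nat TZero \<rho>)" by (simp add: SS_subst[OF ind.prems(1)] inst_cons)
    moreover have "case_nat (num 0) \<rho> = case_nat TZero \<rho>" by simp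
    ultimately show ?case by metis
  next
    case (Suc n)
    have "SS (FAll (FImp A (fsubst succ0 A))) \<rho>" by (rule ind.IH(2)[OF ind.prems])
    hence i: "SS (FImp A (fsubst succ0 A)) (case_nat (num n) \<rho>)" by simp
    have d: "der \<Gamma> (PRec u v (num n)) (fsubst (inst (num n)) A)" by (rule der.ind[OF ind.hyps])
    have "DD \<rho> (fsubst (inst (num n)) A)" using DD_lemma[OF d good_D[OF ind.prems(2)]] .
    hence "DD (case_nat (num n) \<rho>) A" by (simp add: DD_subst inst_cons)
    moreover have "HH \<rho> (fsubst (inst (num n)) A)" using HH_lemma[OF d good_H[OF ind.prems(2)]] .
    hence "HH (case_nat (num n) \<rho>) A" by (simp add: HH_subst inst_cons)
    ultimately have "SS (fsubst succ0 A) (case_nat (num n) \<rho>)" using i Suc by simp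
    hence "SS A (case_nat (TSuc (num n)) \<rho>)" by (simp add: SS_subst[OF cl_cons[OF ind.prems(1)]] succ0_cons)
    moreover have "case_nat (num (Suc n)) \<rho> = case_nat (TSuc (num n)) \<rho>" by simp
    ultimately show ?case by metis
  qed
  let ?t = "tsubst \<rho> t"
  have ct: "tfv ?t = {}" by (rule cl_tsubst[OF ind.prems(1)])
  have "SS A (case_nat (num (teval (\<lambda>_. 0) ?t)) \<rho>) = SS A (case_nat ?t \<rho>)"
    by (rule SS_inv[OF cl_cons[OF ind.prems(1)] cl_cons[OF ind.prems(1) ct]]) (simp, simp only: cv_cons teval_num)
  hence "SS A (case_nat ?t \<rho>)" using n by simp
  thus ?case by (simp add: SS_subst[OF ind.prems(1)] inst_cons)
next
  case (post us Ps \<Gamma> P)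
  have d: "der \<Gamma> (PPost us) (FAtom P)" by (rule der.post[OF post.hyps(1) _ post.hyps(2)]) (use post.IH in blast)
  from HH_lemma[OF d good_H[OF post.prems(2)]] show ?case by (simp add: HH_def)
next
  case (em1 a P \<Gamma> u C v)
  have d: "der \<Gamma> (PEM a u v) (FEx (FAtom C))" by (rule der.em1[OF em1.hyps])
  from HH_lemma[OF d good_H[OF em1.prems(2)]]
  obtain n where n: "aeval (case_nat n (cv \<rho>)) C" by (auto simp: HH_def)
  have c: "cl (case_nat (num n) \<rho>)" by (rule cl_cons[OF em1.prems(1)]) simp
  have cv: "cv (case_nat (num n) \<rho>) = case_nat n (cv \<rho>)" by (simp add: cv_cons)
  have "aeval (\<lambda>_. 0) (asubst (case_nat (num n) \<rho>) C)"
    using n cv by (simp add: aeval_asubst cv_def)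
  from true_atom[OF afv_asubst_cl[OF c] this]
  have "DD (case_nat (num n) \<rho>) (FAtom C)" by (simp add: DD_def)
  moreover have "SS (FAtom C) (case_nat (num n) \<rho>)" "HH (case_nat (num n) \<rho>) (FAtom C)"
    using n cv by (auto simp: HH_def)
  ultimately show ?case by (auto intro!: HOL.exI[of _ "num n"])
qed

theorem mainTheorem4:
  assumes "der [] t (FDisj A B)"
    and "pt_closed t"
    and "fm_closed (FDisj A B)"
  shows "(\<exists>u. der [] u A) \<or> (\<exists>v. der [] v B)"
proof -
  let ?\<rho> = "\<lambda>_::nat. TZero"
  have c: "cl ?\<rho>" by (simp add: cl_def)
  have g: "good [] ?\<rho>" by (simp add: good_def)
  have "SS (FDisj A B) ?\<rho>" by (rule slash_sound[OF assms(1) c g])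
  hence "DD ?\<rho> A \<or> DD ?\<rho> B" by auto
  moreover have "ffv A = {}" "ffv B = {}" using assms(3) by (auto simp: fm_closed_def)
  ultimately show ?thesis by (auto simp: DD_def fsubst_closed)
qed

end
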